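(* Let $J_1,J_2$ be either the value functions $J_{\mathcal{R}_1},J_{\mathcal{R}_2}$ of two reward functions in a fixed environment, or the value functions $J_{\mathcal{T}_1},J_{\mathcal{T}_2}$ of two transition models in a fixed task. Let $\Pi$ be a set of stationary policies containing a nonempty open subset of $\Pi^+$, and suppose $J_1,J_2$ are both non-trivial on $\Pi$ and not equivalent on $\Pi$. Then $J_1$ and $J_2$ admit a value inversion on $\Pi$: there exist $\pi,\pi'\in\Pi$ with $J_1(\pi)>J_1(\pi')$ and $J_2(\pi')>J_2(\pi)$.
   Context: Setting: MDPs $(\mathcal{S},\mathcal{A},\mathcal{T},d_0,\mathcal{R},\gamma)$ with finite $\mathcal{S}$, finite $\mathcal{A}$ with $|\mathcal{A}|>1$, $\gamma\in[0,1)$, all states reachable. An environment is an MDP without reward; a task is an MDP without transition model. Stationary policies $\pi:\mathcal{S}\to\Delta(\mathcal{A})$ are identified with $\Delta(\mathcal{A})^{|\mathcal{S}|}\subset\mathbb{R}^{\mathcal{S}\times\mathcal{A}}$; $\Pi^+$ is the set of those with $\pi(a\mid s)>0$ for all $s,a$, and "open" means open in $\Pi^+$. $J(\pi)=\mathbb{E}\big[\sum_{t\ge0}\gamma^t\mathcal{R}(s_t,a_t)\big]$ ($s_0\sim d_0$, $a_t\sim\pi(\cdot\mid s_t)$, $s_{t+1}\sim\mathcal{T}(\cdot\mid s_t,a_t)$); $J_{\mathcal{R}}$ denotes this with reward $\mathcal{R}$ in a fixed environment, $J_{\mathcal{T}}$ with transition model $\mathcal{T}$ in a fixed task. $J$ is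 trivial on $\Pi$ if constant on $\Pi$; $J_1,J_2$ are equivalent on $\Pi$ if for all $\pi,\pi'\in\Pi$, $J_1(\pi)\ge J_1(\pi')\iff J_2(\pi)\ge J_2(\pi')$. *)

theory Defs
  imports "HOL-Analysis.Analysis"
begin

text \<open>A stationary policy is \<pi> :: 's => 'a => real with \<pi> s a = \<pi>(a|s).
  A transition model is T :: 's => 'a => 's => real with T s a s' = T(s'|s,a).\<close>

definition is_dist :: "('b::finite \<Rightarrow> real) \<Rightarrow> bool" where
  "is_dist p \<longleftrightarrow> (\<forall>x. p x \<ge> 0) \<and> (\<Sum>x\<in>UNIV. p x) = 1"

definition policies :: "('s::finite \<Rightarrow> 'a::finite \<Rightarrow> real) set" where
  "policies = {\<pi>. \<forall>s. is_dist (\<pi> s)}"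

definition policies_pos :: "('s::finite \<Rightarrow> 'a::finite \<Rightarrow> real) set" where
  "policies_pos = {\<pi> \<in> policies. \<forall>s a. \<pi> s a > 0}"

definition is_transition :: "('s::finite \<Rightarrow> 'a::finite \<Rightarrow> 's \<Rightarrow> real) \<Rightarrow> bool" where
  "is_transition T \<longleftrightarrow> (\<forall>s a. is_dist (T s a))"

fun state_dist :: "('s::finite \<Rightarrow> 'a::finite \<Rightarrow> 's \<Rightarrow> real) \<Rightarrow> ('s \<Rightarrow> real)
    \<Rightarrow> ('s \<Rightarrow> 'a \<Rightarrow> real) \<Rightarrow> nat \<Rightarrow> 's \<Rightarrow> real" where
  "state_dist T d0 \<pi> 0 = d0"
| "state_dist T d0 \<pi> (Suc t) =
     (\<lambda>s'. \<Sum>s\<in>UNIV. \<Sum>a\<in>UNIV. state_dist T d0 \<pi> t s * \<pi> s a * T s a s')"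

definition all_reachable :: "('s::finite \<Rightarrow> 'a::finite \<Rightarrow> 's \<Rightarrow> real) \<Rightarrow> ('s \<Rightarrow> real) \<Rightarrow> bool" where
  "all_reachable T d0 \<longleftrightarrow> (\<forall>s. \<exists>\<pi>\<in>policies. \<exists>t. state_dist T d0 \<pi> t s > 0)"

definition valid_mdp :: "('s::finite \<Rightarrow> 'a::finite \<Rightarrow> 's \<Rightarrow> real) \<Rightarrow> ('s \<Rightarrow> real)
    \<Rightarrow> real \<Rightarrow> bool" where
  "valid_mdp T d0 \<gamma> \<longleftrightarrow> is_transition T \<and> is_dist d0 \<and> 0 \<le> \<gamma> \<and> \<gamma> < 1 \<and> all_reachable T d0"

definition J :: "('s::finite \<Rightarrow> 'a::finite \<Rightarrow> 's \<Rightarrow> real) \<Rightarrow> ('s \<Rightarrow> real)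
    \<Rightarrow> ('s \<Rightarrow> 'a \<Rightarrow> real) \<Rightarrow> real \<Rightarrow> ('s \<Rightarrow> 'a \<Rightarrow> real) \<Rightarrow> real" where
  "J T d0 R \<gamma> \<pi> = (\<Sum>t. \<gamma> ^ t * (\<Sum>s\<in>UNIV. \<Sum>a\<in>UNIV. state_dist T d0 \<pi> t s * \<pi> s a * R s a))"

definition trivial_on :: "('p \<Rightarrow> real) \<Rightarrow> 'p set \<Rightarrow> bool" where
  "trivial_on f P \<longleftrightarrow> (\<forall>x\<in>P. \<forall>y\<in>P. f x = f y)"

definition equivalent_on :: "('p \<Rightarrow> real) \<Rightarrow> ('p \<Rightarrow> real) \<Rightarrow> 'p set \<Rightarrow> bool" where
  "equivalent_on f g P \<longleftrightarrow> (\<forall>x\<in>P. \<forall>y\<in>P. f x \<ge> f y \<longleftrightarrow> g x \<ge> g y)"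

end

theory Submission
  imports Defs
begin


definition Pm :: "('s::finite \<Rightarrow> 'a::finite \<Rightarrow> 's \<Rightarrow> real) \<Rightarrow> ('s \<Rightarrow> 'a \<Rightarrow> real) \<Rightarrow> 's \<Rightarrow> 's \<Rightarrow> real" where
  "Pm T \<pi> s s' = (\<Sum>a\<in>UNIV. \<pi> s a * T s a s')"

definition rv :: "('s::finite \<Rightarrow> 'a::finite \<Rightarrow> real) \<Rightarrow> ('s \<Rightarrow> 'a \<Rightarrow> real) \<Rightarrow> 's \<Rightarrow> real" where
  "rv R \<pi> s = (\<Sum>a\<in>UNIV. \<pi> s a * R s a)"

definition stoch :: "('s::finite \<Rightarrow> 's \<Rightarrow> real) \<Rightarrow> bool" where
  "stoch M \<longleftrightarrow> (\<forall>s s'. M s s' \<ge> 0) \<and> (\<forall>s. (\<Sum>s'\<in>UNIV. M s s') = 1)"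

lemma policy_nonneg: "\<pi> \<in> policies \<Longrightarrow> \<pi> s a \<ge> 0"
  by (auto simp: policies_def is_dist_def)

lemma policy_sum: "\<pi> \<in> policies \<Longrightarrow> (\<Sum>a\<in>UNIV. \<pi> s a) = 1"
  by (auto simp: policies_def is_dist_def)

lemma policy_le1:
  assumes "\<pi> \<in> policies" shows "\<pi> s a \<le> 1"
proof -
  have "\<pi> s a \<le> (\<Sum>a\<in>UNIV. \<pi> s a)"
    by (rule member_le_sum) (auto simp: policy_nonneg[OF assms])
  then show ?thesis using policy_sum[OF assms] by simp
qed

lemma stoch_Pm:
  assumes "is_transition T" "\<pi> \<in> policies"
  shows "stoch (Pm T \<pi>)"
proof -
  have T0: "T s a s' \<ge> 0" for s a s' using assms(1) by (auto simp: is_transition_def is_dist_def)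
  have T1: "(\<Sum>s'\<in>UNIV. T s a s') = 1" for s a using assms(1) by (auto simp: is_transition_def is_dist_def)
  have "(\<Sum>s'\<in>UNIV. Pm T \<pi> s s') = 1" for s
  proof -
    have "(\<Sum>s'\<in>UNIV. Pm T \<pi> s s') = (\<Sum>s'\<in>UNIV. \<Sum>a\<in>UNIV. \<pi> s a * T s a s')"
      unfolding Pm_def ..
    also have "\<dots> = (\<Sum>a\<in>UNIV. \<Sum>s'\<in>UNIV. \<pi> s a * T s a s')" by (rule sum.swap)
    also have "\<dots> = (\<Sum>a\<in>UNIV. \<pi> s a * (\<Sum>s'\<in>UNIV. T s a s'))" by (simp add: sum_distrib_left)
    finally have "(\<Sum>s'\<in>UNIV. Pm T \<pi> s s') = (\<Sum>a\<in>UNIV. \<pi> s a * (\<Sum>s'\<in>UNIV. T s a s'))" .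
    also have "\<dots> = 1" using T1 policy_sum[OF assms(2)] by simp
    finally show ?thesis .
  qed
  moreover have "Pm T \<pi> s s' \<ge> 0" for s s'
    unfolding Pm_def using T0 policy_nonneg[OF assms(2)] by (intro sum_nonneg) auto
  ultimately show ?thesis unfolding stoch_def by auto
qed

lemma state_dist_Suc_Pm:
  "state_dist T d0 \<pi> (Suc t) s' = (\<Sum>s\<in>UNIV. state_dist T d0 \<pi> t s * Pm T \<pi> s s')"
  by (simp add: Pm_def sum_distrib_left mult.assoc)

lemma state_dist_dist:
  assumes "is_transition T" "is_dist d0" "\<pi> \<in> policies"
  shows "is_dist (state_dist T d0 \<pi> t)"
proof (induction t)
  case 0 then show ?case using assms by simp
next
  case (Suc t)
  have st: "stoch (Pm T \<pi>)" using stoch_Pm assms by blast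
  let ?d = "state_dist T d0 \<pi> t"
  have "?d s \<ge> 0" for s using Suc by (auto simp: is_dist_def)
  then have nn: "state_dist T d0 \<pi> (Suc t) s' \<ge> 0" for s'
    unfolding state_dist_Suc_Pm using st by (intro sum_nonneg) (auto simp: stoch_def)
  have "(\<Sum>s'\<in>UNIV. state_dist T d0 \<pi> (Suc t) s') = (\<Sum>s'\<in>UNIV. \<Sum>s\<in>UNIV. ?d s * Pm T \<pi> s s')"
    unfolding state_dist_Suc_Pm ..
  also have "\<dots> = (\<Sum>s\<in>UNIV. \<Sum>s'\<in>UNIV. ?d s * Pm T \<pi> s s')" by (rule sum.swap)
  also have "\<dots> = (\<Sum>s\<in>UNIV. ?d s * (\<Sum>s'\<in>UNIV. Pm T \<pi> s s'))" by (simp add: sum_distrib_left)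
  finally have "(\<Sum>s'\<in>UNIV. state_dist T d0 \<pi> (Suc t) s') = (\<Sum>s\<in>UNIV. ?d s * (\<Sum>s'\<in>UNIV. Pm T \<pi> s s'))" .
  also have "\<dots> = 1" using st Suc by (simp add: stoch_def is_dist_def)
  finally show ?case using nn by (simp add: is_dist_def)
qed

lemma stoch_inj:
  assumes "stoch M" "0 \<le> \<gamma>" "\<gamma> < 1" "\<forall>s. V s = \<gamma> * (\<Sum>s'\<in>UNIV. M s s' * V s')"
  shows "V s = 0"
proof -
  define m where "m = Max (range (\<lambda>s. \<bar>V s\<bar>))"
  have fin: "finite (range (\<lambda>s. \<bar>V s\<bar>))" by simp
  have le: "\<bar>V s\<bar> \<le> m" for s unfolding m_def by (rule Max_ge[OF fin]) auto
  have "m \<in> range (\<lambda>s. \<bar>V s\<bar>)" unfolding m_def by (rule Max_in[OF fin]) auto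
  then obtain s0 where s0: "\<bar>V s0\<bar> = m" by auto
  have "\<bar>V s0\<bar> = \<gamma> * \<bar>\<Sum>s'\<in>UNIV. M s0 s' * V s'\<bar>" using assms(2,4) by (metis abs_mult abs_of_nonneg)
  also have "\<dots> \<le> \<gamma> * (\<Sum>s'\<in>UNIV. M s0 s' * m)"
  proof (intro mult_left_mono assms(2))
    have "\<bar>\<Sum>s'\<in>UNIV. M s0 s' * V s'\<bar> \<le> (\<Sum>s'\<in>UNIV. \<bar>M s0 s' * V s'\<bar>)" by (rule sum_abs)
    also have "\<dots> \<le> (\<Sum>s'\<in>UNIV. M s0 s' * m)"
      using assms(1) le by (intro sum_mono) (auto simp: stoch_def abs_mult intro: mult_left_mono)
    finally show "\<bar>\<Sum>s'\<in>UNIV. M s0 s' * V s'\<bar> \<le> (\<Sum>s'\<in>UNIV. M s0 s' * m)" .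
  qed
  also have "\<dots> = \<gamma> * m" using assms(1) by (simp add: stoch_def sum_distrib_right[symmetric])
  finally have "m \<le> \<gamma> * m" using s0 by simp
  then have "(1 - \<gamma>) * m \<le> 0" by (simp add: algebra_simps)
  then have "m \<le> 0" using assms(3) by (simp add: mult_le_0_iff)
  moreover have "m \<ge> 0" using s0 abs_ge_zero by metis
  ultimately have "m = 0" by simp
  then show ?thesis using le[of s] by simp
qed

lemma stoch_exists:
  fixes M :: "'s::finite \<Rightarrow> 's \<Rightarrow> real"
  assumes "stoch M" "0 \<le> \<gamma>" "\<gamma> < 1"
  shows "\<exists>V. \<forall>s. V s = \<rho> s + \<gamma> * (\<Sum>s'\<in>UNIV. M s s' * V s')"
proof -
  define f :: "real^'s \<Rightarrow> real^'s" where "f = (\<lambda>v. \<chi> s. v$s - \<gamma> * (\<Sum>s'\<in>UNIV. M s s' * v$s'))"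
  have fv: "f v $ s = v$s - \<gamma> * (\<Sum>s'\<in>UNIV. M s s' * v$s')" for v s
    unfolding f_def by simp
  have lin: "linear f"
  proof (rule linearI)
    fix x y :: "real^'s" and c :: real
    show "f (x + y) = f x + f y"
    proof (rule vec_eq_iff[THEN iffD2], rule allI)
      fix s
      have "(\<Sum>s'\<in>UNIV. M s s' * (x + y)$s') = (\<Sum>s'\<in>UNIV. M s s' * x$s') + (\<Sum>s'\<in>UNIV. M s s' * y$s')"
        unfolding vector_add_component distrib_left by (rule sum.distrib)
      then show "f (x + y) $ s = (f x + f y) $ s"
        unfolding fv vector_add_component by (simp add: algebra_simps)
    qed
    show "f (c *\<^sub>R x) = c *\<^sub>R f x"
    proof (rule vec_eq_iff[THEN iffD2], rule allI)
      fix s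
      have "(\<Sum>s'\<in>UNIV. M s s' * (c *\<^sub>R x)$s') = c * (\<Sum>s'\<in>UNIV. M s s' * x$s')"
        unfolding vector_scaleR_component sum_distrib_left by (simp add: mult.left_commute)
      then show "f (c *\<^sub>R x) $ s = (c *\<^sub>R f x) $ s"
        unfolding fv vector_scaleR_component by (simp add: algebra_simps)
    qed
  qed
  have inj0: "\<forall>v. f v = 0 \<longrightarrow> v = 0"
  proof (intro allI impI)
    fix v assume fv0: "f v = 0"
    have hv: "v$s = \<gamma> * (\<Sum>s'\<in>UNIV. M s s' * v$s')" for s
    proof -
      have "f v $ s = 0" using fv0 zero_index by metis
      then show ?thesis unfolding fv by linarith
    qed
    have "v$s = 0" for s
      by (rule stoch_inj[OF assms, of "\<lambda>s. v$s"]) (use hv in blast)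
    then show "v = 0" by (intro vec_eq_iff[THEN iffD2] allI) simp
  qed
  have "inj f" using linear_injective_0[OF lin] inj0 by simp
  then have "surj f" by (rule eucl.linear_inj_imp_surj[OF lin])
  then obtain v where v: "(\<chi> s. \<rho> s) = f v" by (rule surjE)
  have "f v $ s = \<rho> s" for s unfolding v[symmetric] by (rule vec_lambda_beta)
  then have "\<forall>s. v$s = \<rho> s + \<gamma> * (\<Sum>s'\<in>UNIV. M s s' * v$s')"
    unfolding fv by (metis add_diff_cancel_left' diff_add_cancel)
  then show ?thesis by (intro exI[of _ "\<lambda>s. v$s"])
qed



lemma dist_le1: assumes "is_dist d" shows "d x \<le> 1"
proof -
  have "d x \<le> (\<Sum>y\<in>UNIV. d y)" by (rule member_le_sum) (use assms in \<open>auto simp: is_dist_def\<close>)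
  then show ?thesis using assms by (simp add: is_dist_def)
qed

lemma J_bellman:
  assumes T: "is_transition T" and d: "is_dist d0" and g: "0 \<le> \<gamma>" "\<gamma> < 1" and p: "\<pi> \<in> policies"
    and V: "\<forall>s. V s = rv R \<pi> s + \<gamma> * (\<Sum>s'\<in>UNIV. Pm T \<pi> s s' * V s')"
  shows "J T d0 R \<gamma> \<pi> = (\<Sum>s\<in>UNIV. d0 s * V s)"
proof -
  define X where "X t = (\<Sum>s\<in>UNIV. state_dist T d0 \<pi> t s * V s)" for t
  define f where "f t = \<gamma>^t * X t" for t
  have hterm: "\<gamma>^t * (\<Sum>s\<in>UNIV. \<Sum>a\<in>UNIV. state_dist T d0 \<pi> t s * \<pi> s a * R s a) = f t - f (Suc t)" for t
  proof -
    let ?d = "state_dist T d0 \<pi> t"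
    have "(\<Sum>s\<in>UNIV. \<Sum>a\<in>UNIV. ?d s * \<pi> s a * R s a) = (\<Sum>s\<in>UNIV. ?d s * rv R \<pi> s)"
      by (simp add: rv_def sum_distrib_left mult.assoc)
    also have "\<dots> = (\<Sum>s\<in>UNIV. ?d s * V s) - \<gamma> * (\<Sum>s\<in>UNIV. ?d s * (\<Sum>s'\<in>UNIV. Pm T \<pi> s s' * V s'))"
    proof -
      have eq: "rv R \<pi> s = V s - \<gamma> * (\<Sum>s'\<in>UNIV. Pm T \<pi> s s' * V s')" for s
        using V[rule_format, of s] by linarith
      show ?thesis unfolding eq right_diff_distrib sum_subtractf
        by (simp add: sum_distrib_left mult.left_commute)
    qed
    also have "(\<Sum>s\<in>UNIV. ?d s * (\<Sum>s'\<in>UNIV. Pm T \<pi> s s' * V s')) = X (Suc t)"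
    proof -
      have "(\<Sum>s\<in>UNIV. ?d s * (\<Sum>s'\<in>UNIV. Pm T \<pi> s s' * V s'))
          = (\<Sum>s\<in>UNIV. \<Sum>s'\<in>UNIV. ?d s * Pm T \<pi> s s' * V s')"
        by (simp add: sum_distrib_left mult.assoc)
      also have "\<dots> = (\<Sum>s'\<in>UNIV. \<Sum>s\<in>UNIV. ?d s * Pm T \<pi> s s' * V s')"
        by (rule sum.swap)
      also have "\<dots> = X (Suc t)"
        unfolding X_def state_dist_Suc_Pm by (simp add: sum_distrib_right)
      finally show ?thesis .
    qed
    finally have e: "(\<Sum>s\<in>UNIV. \<Sum>a\<in>UNIV. ?d s * \<pi> s a * R s a) = X t - \<gamma> * X (Suc t)"
      by (simp add: X_def)
    show ?thesis unfolding e f_def by (simp add: right_diff_distrib mult.assoc)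
  qed
  define B where "B = (\<Sum>s\<in>UNIV. \<bar>V s\<bar>)"
  have XB: "\<bar>X t\<bar> \<le> B" for t
  proof -
    have dd: "is_dist (state_dist T d0 \<pi> t)" using state_dist_dist[OF T d p] .
    have "\<bar>X t\<bar> \<le> (\<Sum>s\<in>UNIV. \<bar>state_dist T d0 \<pi> t s * V s\<bar>)" unfolding X_def by (rule sum_abs)
    also have "\<dots> \<le> B" unfolding B_def
    proof (rule sum_mono)
      fix s
      have "0 \<le> state_dist T d0 \<pi> t s" "state_dist T d0 \<pi> t s \<le> 1"
        using dd dist_le1[OF dd] by (auto simp: is_dist_def)
      then show "\<bar>state_dist T d0 \<pi> t s * V s\<bar> \<le> \<bar>V s\<bar>"
        by (simp add: abs_mult mult_left_le_one_le)
    qed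
    finally show ?thesis .
  qed
  have f0: "f \<longlonglongrightarrow> 0"
  proof (rule Lim_null_comparison)
    show "\<forall>\<^sub>F n in sequentially. norm (f n) \<le> \<gamma>^n * B"
      using XB g by (intro always_eventually allI) (auto simp: f_def abs_mult intro!: mult_left_mono)
    show "(\<lambda>n. \<gamma>^n * B) \<longlonglongrightarrow> 0"
      using g by (intro tendsto_mult_left_zero LIMSEQ_power_zero) auto
  qed
  have "(\<lambda>t. \<gamma>^t * (\<Sum>s\<in>UNIV. \<Sum>a\<in>UNIV. state_dist T d0 \<pi> t s * \<pi> s a * R s a)) sums (f 0)"
    unfolding sums_def hterm sum_lessThan_telescope'
    using tendsto_diff[OF tendsto_const f0, of "f 0"] by simp
  then have "J T d0 R \<gamma> \<pi> = f 0" unfolding J_def by (rule sums_unique[symmetric])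
  moreover have "f 0 = (\<Sum>s\<in>UNIV. d0 s * V s)" unfolding f_def X_def by simp
  ultimately show ?thesis by simp
qed



definition seg :: "('s \<Rightarrow> 'a \<Rightarrow> real) \<Rightarrow> ('s \<Rightarrow> 'a \<Rightarrow> real) \<Rightarrow> real \<Rightarrow> 's \<Rightarrow> 'a \<Rightarrow> real" where
  "seg p q \<mu> = (\<lambda>s a. (1 - \<mu>) * p s a + \<mu> * q s a)"

definition onestate :: "'s \<Rightarrow> ('s \<Rightarrow> 'a \<Rightarrow> real) \<Rightarrow> ('s \<Rightarrow> 'a \<Rightarrow> real) \<Rightarrow> bool" where
  "onestate s0 p q \<longleftrightarrow> (\<forall>s. s \<noteq> s0 \<longrightarrow> p s = q s)"

lemma seg_policy:
  assumes "p \<in> policies" "q \<in> policies" "0 \<le> \<mu>" "\<mu> \<le> 1"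
  shows "seg p q \<mu> \<in> policies"
proof -
  have "is_dist (seg p q \<mu> s)" for s
  proof -
    have "seg p q \<mu> s a \<ge> 0" for a
      unfolding seg_def using assms policy_nonneg[OF assms(1)] policy_nonneg[OF assms(2)] by simp
    moreover have "(\<Sum>a\<in>UNIV. seg p q \<mu> s a) = (1-\<mu>) * (\<Sum>a\<in>UNIV. p s a) + \<mu> * (\<Sum>a\<in>UNIV. q s a)"
      unfolding seg_def by (simp add: sum.distrib sum_distrib_left)
    ultimately show ?thesis using policy_sum[OF assms(1)] policy_sum[OF assms(2)] by (simp add: is_dist_def)
  qed
  then show ?thesis by (simp add: policies_def)
qed

lemma seg_0[simp]: "seg p q 0 = p" by (simp add: seg_def)
lemma seg_1[simp]: "seg p q 1 = q" by (simp add: seg_def)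

lemma Pm_seg_eq:
  assumes "onestate s0 p q"
  shows "Pm T (seg p q \<mu>) s s' = Pm T p s s' + (if s = s0 then \<mu> * (Pm T q s0 s' - Pm T p s0 s') else 0)"
proof (cases "s = s0")
  case True
  have "Pm T (seg p q \<mu>) s s' = (\<Sum>a\<in>UNIV. (1-\<mu>) * (p s a * T s a s') + \<mu> * (q s a * T s a s'))"
    unfolding Pm_def seg_def by (simp add: algebra_simps)
  also have "\<dots> = (1-\<mu>) * Pm T p s s' + \<mu> * Pm T q s s'"
    unfolding Pm_def by (simp add: sum.distrib sum_distrib_left)
  finally show ?thesis using True by (simp add: algebra_simps)
next
  case False
  then have "q s = p s" using assms by (simp add: onestate_def)
  then have "seg p q \<mu> s = p s" unfolding seg_def by (auto simp: algebra_simps)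
  then show ?thesis using False by (simp add: Pm_def)
qed

lemma rv_seg_eq:
  assumes "onestate s0 p q"
  shows "rv R (seg p q \<mu>) s = rv R p s + (if s = s0 then \<mu> * (rv R q s0 - rv R p s0) else 0)"
proof (cases "s = s0")
  case True
  have "rv R (seg p q \<mu>) s = (\<Sum>a\<in>UNIV. (1-\<mu>) * (p s a * R s a) + \<mu> * (q s a * R s a))"
    unfolding rv_def seg_def by (simp add: algebra_simps)
  also have "\<dots> = (1-\<mu>) * rv R p s + \<mu> * rv R q s"
    unfolding rv_def by (simp add: sum.distrib sum_distrib_left)
  finally show ?thesis using True by (simp add: algebra_simps)
next
  case False
  then have "q s = p s" using assms by (simp add: onestate_def)
  then have "seg p q \<mu> s = p s" unfolding seg_def by (auto simp: algebra_simps)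
  then show ?thesis using False by (simp add: rv_def)
qed

lemma Pm_seg_sum:
  assumes "onestate s0 p q"
  shows "(\<Sum>s'\<in>UNIV. Pm T (seg p q \<mu>) s s' * X s') = (\<Sum>s'\<in>UNIV. Pm T p s s' * X s')
     + (if s = s0 then \<mu> * (\<Sum>s'\<in>UNIV. (Pm T q s0 s' - Pm T p s0 s') * X s') else 0)"
  unfolding Pm_seg_eq[OF assms]
  by (cases "s = s0") (simp_all add: distrib_right sum.distrib sum_distrib_left mult.assoc)

definition mobius_on01 :: "(real \<Rightarrow> real) \<Rightarrow> bool" where
  "mobius_on01 f \<longleftrightarrow> (\<exists>\<alpha> \<beta> b. \<forall>\<mu>\<in>{0..1}. 1 + b*\<mu> > 0 \<and> f \<mu> = (\<alpha> + \<beta>*\<mu>)/(1 + b*\<mu>))"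

lemma mobius_J:
  assumes T: "is_transition T" and d: "is_dist d0" and g: "0 \<le> \<gamma>" "\<gamma> < 1"
    and p: "p \<in> policies" and q: "q \<in> policies" and os: "onestate s0 p q"
  shows "mobius_on01 (\<lambda>\<mu>. J T d0 R \<gamma> (seg p q \<mu>))"
proof -
  have st0: "stoch (Pm T p)" by (rule stoch_Pm[OF T p])
  obtain V0 where V0: "\<forall>s. V0 s = rv R p s + \<gamma> * (\<Sum>s'\<in>UNIV. Pm T p s s' * V0 s')"
    using stoch_exists[OF st0 g] by blast
  obtain H where H: "\<forall>s. H s = (if s = s0 then 1 else 0) + \<gamma> * (\<Sum>s'\<in>UNIV. Pm T p s s' * H s')"
    using stoch_exists[OF st0 g, of "\<lambda>s. if s = s0 then 1 else 0"] by blast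
  define a where "a = (rv R q s0 - rv R p s0) + \<gamma> * (\<Sum>s'\<in>UNIV. (Pm T q s0 s' - Pm T p s0 s') * V0 s')"
  define bb where "bb = \<gamma> * (\<Sum>s'\<in>UNIV. (Pm T q s0 s' - Pm T p s0 s') * H s')"
  have nz: "1 - \<mu> * bb \<noteq> 0" if "0 \<le> \<mu>" "\<mu> \<le> 1" for \<mu>
  proof
    assume z: "1 - \<mu> * bb = 0"
    have stm: "stoch (Pm T (seg p q \<mu>))" by (rule stoch_Pm[OF T seg_policy[OF p q that]])
    have hH: "\<forall>s. H s = \<gamma> * (\<Sum>s'\<in>UNIV. Pm T (seg p q \<mu>) s s' * H s')"
    proof
      fix s
      have "\<gamma> * (\<Sum>s'\<in>UNIV. Pm T (seg p q \<mu>) s s' * H s')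
          = \<gamma> * (\<Sum>s'\<in>UNIV. Pm T p s s' * H s') + (if s = s0 then \<mu> * bb else 0)"
        unfolding Pm_seg_sum[OF os] bb_def by (simp add: algebra_simps)
      also have "\<dots> = H s - (if s = s0 then 1 else 0) + (if s = s0 then \<mu> * bb else 0)"
        using H[rule_format, of s] by simp
      also have "\<dots> = H s" using z by simp
      finally show "H s = \<gamma> * (\<Sum>s'\<in>UNIV. Pm T (seg p q \<mu>) s s' * H s')" by simp
    qed
    have H0: "H s = 0" for s by (rule stoch_inj[OF stm g hH])
    have "H s0 = 1 + \<gamma> * (\<Sum>s'\<in>UNIV. Pm T p s0 s' * H s')"
      using H[rule_format, of s0, unfolded if_P[OF refl]] .
    then show False using H0 by simp
  qed
  have pos: "1 - \<mu> * bb > 0" if "0 \<le> \<mu>" "\<mu> \<le> 1" for \<mu>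
  proof (rule ccontr)
    assume "\<not> 1 - \<mu> * bb > 0"
    then have neg: "1 - \<mu> * bb < 0" using nz[OF that] by linarith
    then have "\<mu> * bb > 1" by simp
    have "bb > 1"
    proof (rule ccontr)
      assume nb: "\<not> bb > 1"
      have "\<mu> * bb \<le> 1"
      proof (cases "bb \<ge> 0")
        case True
        then have "\<mu> * bb \<le> 1 * bb" using that by (intro mult_right_mono) auto
        then show ?thesis using nb by simp
      next
        case False
        then have "\<mu> * bb \<le> 0" using that by (simp add: mult_nonneg_nonpos)
        then show ?thesis by simp
      qed
      then show False using \<open>\<mu> * bb > 1\<close> by simp
    qed
    then have "0 \<le> 1/bb" "1/bb \<le> 1" by auto
    from nz[OF this] show False using \<open>bb > 1\<close> by simp
  qed
  define c0 where "c0 = (\<Sum>s\<in>UNIV. d0 s * V0 s)"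
  define c1 where "c1 = (\<Sum>s\<in>UNIV. d0 s * H s)"
  have "\<forall>\<mu>\<in>{0..1}. 1 + (-bb)*\<mu> > 0 \<and> J T d0 R \<gamma> (seg p q \<mu>) = (c0 + (a*c1 - c0*bb)*\<mu>)/(1 + (-bb)*\<mu>)"
  proof
    fix \<mu> :: real assume "\<mu> \<in> {0..1}"
    then have m: "0 \<le> \<mu>" "\<mu> \<le> 1" by auto
    define \<kappa> where "\<kappa> = \<mu> * a / (1 - \<mu> * bb)"
    have k: "\<kappa> * (1 - \<mu> * bb) = \<mu> * a" unfolding \<kappa>_def using nz[OF m] by simp
    define V where "V s = V0 s + \<kappa> * H s" for s
    have bell: "\<forall>s. V s = rv R (seg p q \<mu>) s + \<gamma> * (\<Sum>s'\<in>UNIV. Pm T (seg p q \<mu>) s s' * V s')"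
    proof
      fix s
      have e1: "(\<Sum>s'\<in>UNIV. Pm T p s s' * V s') = (\<Sum>s'\<in>UNIV. Pm T p s s' * V0 s') + \<kappa> * (\<Sum>s'\<in>UNIV. Pm T p s s' * H s')"
        unfolding V_def by (simp add: distrib_left sum.distrib sum_distrib_left mult.left_commute)
      have e2: "(\<Sum>s'\<in>UNIV. (Pm T q s0 s' - Pm T p s0 s') * V s') = (\<Sum>s'\<in>UNIV. (Pm T q s0 s' - Pm T p s0 s') * V0 s') + \<kappa> * (\<Sum>s'\<in>UNIV. (Pm T q s0 s' - Pm T p s0 s') * H s')"
        unfolding V_def by (simp add: distrib_left sum.distrib sum_distrib_left mult.left_commute)
      have "rv R (seg p q \<mu>) s + \<gamma> * (\<Sum>s'\<in>UNIV. Pm T (seg p q \<mu>) s s' * V s')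
          = (rv R p s + \<gamma> * (\<Sum>s'\<in>UNIV. Pm T p s s' * V0 s')) + \<kappa> * (\<gamma> * (\<Sum>s'\<in>UNIV. Pm T p s s' * H s'))
            + (if s = s0 then \<mu> * a + \<kappa> * \<mu> * bb else 0)"
        unfolding rv_seg_eq[OF os] Pm_seg_sum[OF os] e1 e2 a_def bb_def
        by (simp add: algebra_simps)
      also have "\<dots> = V0 s + \<kappa> * (H s - (if s = s0 then 1 else 0)) + (if s = s0 then \<mu> * a + \<kappa> * \<mu> * bb else 0)"
        using V0[rule_format, of s] H[rule_format, of s] by simp
      also have "\<dots> = V s"
        unfolding V_def using k by (simp add: algebra_simps)
      finally show "V s = rv R (seg p q \<mu>) s + \<gamma> * (\<Sum>s'\<in>UNIV. Pm T (seg p q \<mu>) s s' * V s')" by simp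
    qed
    have "J T d0 R \<gamma> (seg p q \<mu>) = (\<Sum>s\<in>UNIV. d0 s * V s)"
      by (rule J_bellman[OF T d g seg_policy[OF p q m] bell])
    also have "\<dots> = c0 + \<kappa> * c1"
      unfolding V_def c0_def c1_def by (simp add: distrib_left sum.distrib sum_distrib_left mult.left_commute)
    also have "\<dots> = (c0 + (a*c1 - c0*bb)*\<mu>)/(1 + (-bb)*\<mu>)"
      unfolding \<kappa>_def using nz[OF m] by (simp add: field_simps)
    finally show "1 + (-bb)*\<mu> > 0 \<and> J T d0 R \<gamma> (seg p q \<mu>) = (c0 + (a*c1 - c0*bb)*\<mu>)/(1 + (-bb)*\<mu>)"
      using pos[OF m] by (simp add: mult.commute)
  qed
  then show ?thesis unfolding mobius_on01_def by blast
qed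



definition pbox :: "('s \<Rightarrow> 'a \<Rightarrow> real) \<Rightarrow> real \<Rightarrow> ('s \<Rightarrow> 'a \<Rightarrow> real) set" where
  "pbox w \<epsilon> = {\<pi>. \<forall>s a. \<bar>\<pi> s a - w s a\<bar> < \<epsilon>}"

lemma open_fun_nbhd:
  fixes T :: "('i \<Rightarrow> 'b::topological_space) set"
  assumes "open T" "x \<in> T"
  shows "\<exists>X. (\<forall>i. open (X i) \<and> x i \<in> X i) \<and> (\<forall>y. (\<forall>i. y i \<in> X i) \<longrightarrow> y \<in> T)"
proof -
  have "openin (product_topology (\<lambda>i. euclidean) UNIV) T" using assms(1) by (simp add: open_fun_def)
  from product_topology_open_contains_basis[OF this assms(2)]
  obtain X where X: "x \<in> (\<Pi>\<^sub>E i\<in>UNIV. X i)" "\<forall>i. openin euclidean (X i)" "(\<Pi>\<^sub>E i\<in>UNIV. X i) \<subseteq> T"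
    by auto
  show ?thesis
  proof (intro exI conjI allI impI)
    fix i show "open (X i)" using X(2) by simp
    show "x i \<in> X i" using X(1) by auto
  next
    fix y assume "\<forall>i. y i \<in> X i"
    then have "y \<in> (\<Pi>\<^sub>E i\<in>UNIV. X i)" by auto
    then show "y \<in> T" using X(3) by auto
  qed
qed

lemma open_real_fun_box:
  fixes T :: "('i::finite \<Rightarrow> real) set"
  assumes "open T" "x \<in> T"
  shows "\<exists>\<epsilon>>0. \<forall>y. (\<forall>i. \<bar>y i - x i\<bar> < \<epsilon>) \<longrightarrow> y \<in> T"
proof -
  obtain X where X: "\<forall>i. open (X i) \<and> x i \<in> X i" "\<forall>y. (\<forall>i. y i \<in> X i) \<longrightarrow> y \<in> T"
    using open_fun_nbhd[OF assms] by blast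
  have "\<forall>i. \<exists>e>0. \<forall>z. dist z (x i) < e \<longrightarrow> z \<in> X i"
  proof
    fix i
    have "open (X i)" "x i \<in> X i" using X(1) by auto
    then show "\<exists>e>0. \<forall>z. dist z (x i) < e \<longrightarrow> z \<in> X i"
      unfolding open_dist by blast
  qed
  then have "\<exists>E. \<forall>i. E i > 0 \<and> (\<forall>z. dist z (x i) < E i \<longrightarrow> z \<in> X i)"
    by (rule choice)
  then obtain E where E: "\<forall>i. E i > 0 \<and> (\<forall>z. dist z (x i) < E i \<longrightarrow> z \<in> X i)"
    by blast
  define \<epsilon> where "\<epsilon> = Min (range E)"
  have "\<epsilon> \<in> range E" unfolding \<epsilon>_def by (rule Min_in) auto
  then have pos: "\<epsilon> > 0" using E by auto
  have le: "\<epsilon> \<le> E i" for i unfolding \<epsilon>_def by (rule Min_le) auto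
  show ?thesis
  proof (intro exI[of _ \<epsilon>] conjI allI impI pos)
    fix y assume "\<forall>i. \<bar>y i - x i\<bar> < \<epsilon>"
    have "y i \<in> X i" for i
    proof -
      have "\<bar>y i - x i\<bar> < E i" using \<open>\<forall>i. \<bar>y i - x i\<bar> < \<epsilon>\<close> le[of i] by (meson less_le_trans)
      then show ?thesis using E by (auto simp: dist_real_def)
    qed
    then show "y \<in> T" using X(2) by blast
  qed
qed

lemma open_box:
  fixes T :: "('s::finite \<Rightarrow> 'a::finite \<Rightarrow> real) set"
  assumes "open T" "w \<in> T"
  shows "\<exists>\<epsilon>>0. pbox w \<epsilon> \<subseteq> T"
proof -
  obtain X where X: "\<forall>s. open (X s) \<and> w s \<in> X s" "\<forall>y. (\<forall>s. y s \<in> X s) \<longrightarrow> y \<in> T"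
    using open_fun_nbhd[OF assms] by blast
  have "\<forall>s. \<exists>e>0. \<forall>y. (\<forall>a. \<bar>y a - w s a\<bar> < e) \<longrightarrow> y \<in> X s"
  proof
    fix s
    have "open (X s)" "w s \<in> X s" using X(1) by auto
    then show "\<exists>e>0. \<forall>y. (\<forall>a. \<bar>y a - w s a\<bar> < e) \<longrightarrow> y \<in> X s"
      by (rule open_real_fun_box)
  qed
  then have "\<exists>E. \<forall>s. E s > 0 \<and> (\<forall>y. (\<forall>a. \<bar>y a - w s a\<bar> < E s) \<longrightarrow> y \<in> X s)"
    by (rule choice)
  then obtain E where E: "\<forall>s. E s > 0 \<and> (\<forall>y. (\<forall>a. \<bar>y a - w s a\<bar> < E s) \<longrightarrow> y \<in> X s)"
    by blast
  define \<epsilon> where "\<epsilon> = Min (range E)"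
  have "\<epsilon> \<in> range E" unfolding \<epsilon>_def by (rule Min_in) auto
  then have pos: "\<epsilon> > 0" using E by auto
  have le: "\<epsilon> \<le> E s" for s unfolding \<epsilon>_def by (rule Min_le) auto
  show ?thesis
  proof (intro exI[of _ \<epsilon>] conjI subsetI pos)
    fix y assume yb: "y \<in> pbox w \<epsilon>"
    have "y s \<in> X s" for s
    proof -
      have "\<bar>y s a - w s a\<bar> < E s" for a
      proof -
        have "\<bar>y s a - w s a\<bar> < \<epsilon>" using yb unfolding pbox_def by blast
        then show ?thesis using le[of s] by linarith
      qed
      then show ?thesis using E by blast
    qed
    then show "y \<in> T" using X(2) by blast
  qed
qed

lemma cont_coord: "continuous_on UNIV (\<lambda>\<pi>::'s \<Rightarrow> 'a \<Rightarrow> real. \<pi> s a)"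
proof -
  have c1: "continuous_on UNIV (\<lambda>\<pi>::'s \<Rightarrow> 'a \<Rightarrow> real. \<pi> s)" by (rule continuous_on_product_coordinates)
  have c2: "continuous_on UNIV (\<lambda>f::'a \<Rightarrow> real. f a)" by (rule continuous_on_product_coordinates)
  have "continuous_on UNIV ((\<lambda>f::'a \<Rightarrow> real. f a) \<circ> (\<lambda>\<pi>::'s \<Rightarrow> 'a \<Rightarrow> real. \<pi> s))"
    by (rule continuous_on_compose[OF c1 continuous_on_subset[OF c2]]) auto
  then show ?thesis by (simp add: o_def)
qed

lemma cont_state_dist: "continuous_on UNIV (\<lambda>\<pi>. state_dist T d0 \<pi> t s)"
proof (induction t arbitrary: s)
  case 0 then show ?case by simp
next
  case (Suc t)
  show ?case
    by (simp only: state_dist.simps) (intro continuous_intros Suc cont_coord)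
qed

lemma J_cont:
  assumes T: "is_transition T" and d: "is_dist d0" and g: "0 \<le> \<gamma>" "\<gamma> < 1"
  shows "continuous_on policies (J T d0 R \<gamma>)"
proof -
  define f where "f t \<pi> = \<gamma>^t * (\<Sum>s\<in>UNIV. \<Sum>a\<in>UNIV. state_dist T d0 \<pi> t s * \<pi> s a * R s a)" for t \<pi>
  define Rb where "Rb = (\<Sum>s\<in>UNIV. \<Sum>a\<in>UNIV. \<bar>R s a\<bar>)"
  have bnd: "norm (f n \<pi>) \<le> \<gamma>^n * Rb" if "\<pi> \<in> policies" for n \<pi>
  proof -
    have dd: "is_dist (state_dist T d0 \<pi> n)" by (rule state_dist_dist[OF T d that])
    have "\<bar>\<Sum>s\<in>UNIV. \<Sum>a\<in>UNIV. state_dist T d0 \<pi> n s * \<pi> s a * R s a\<bar>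
        \<le> (\<Sum>s\<in>UNIV. \<bar>\<Sum>a\<in>UNIV. state_dist T d0 \<pi> n s * \<pi> s a * R s a\<bar>)" by (rule sum_abs)
    also have "\<dots> \<le> (\<Sum>s\<in>UNIV. \<Sum>a\<in>UNIV. \<bar>state_dist T d0 \<pi> n s * \<pi> s a * R s a\<bar>)"
      by (intro sum_mono sum_abs)
    also have "\<dots> \<le> Rb" unfolding Rb_def
    proof (intro sum_mono)
      fix s a
      have h1: "0 \<le> state_dist T d0 \<pi> n s" "state_dist T d0 \<pi> n s \<le> 1"
        using dd dist_le1[OF dd] by (auto simp: is_dist_def)
      have h2: "0 \<le> \<pi> s a" "\<pi> s a \<le> 1" using policy_nonneg[OF that] policy_le1[OF that] by auto
      have "state_dist T d0 \<pi> n s * \<pi> s a \<le> 1" using h1 h2 by (simp add: mult_le_one)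
      moreover have "0 \<le> state_dist T d0 \<pi> n s * \<pi> s a" using h1 h2 by simp
      ultimately show "\<bar>state_dist T d0 \<pi> n s * \<pi> s a * R s a\<bar> \<le> \<bar>R s a\<bar>"
        by (simp add: abs_mult mult_left_le_one_le)
    qed
    finally show ?thesis unfolding f_def using g by (simp add: abs_mult mult_left_mono)
  qed
  have sm: "summable (\<lambda>n. \<gamma>^n * Rb)" using g by (intro summable_mult2 summable_geometric) auto
  have ul: "uniform_limit policies (\<lambda>n \<pi>. \<Sum>i<n. f i \<pi>) (\<lambda>\<pi>. \<Sum>i. f i \<pi>) sequentially"
  proof (rule Weierstrass_m_test[of policies f "\<lambda>n. \<gamma>^n * Rb"])
    show "\<And>n x. x \<in> policies \<Longrightarrow> norm (f n x) \<le> \<gamma> ^ n * Rb" by (rule bnd)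
    show "summable (\<lambda>n. \<gamma> ^ n * Rb)" by (rule sm)
  qed
  have "continuous_on policies (\<lambda>\<pi>. \<Sum>i. f i \<pi>)"
  proof (rule uniform_limit_theorem[OF _ ul])
    show "\<forall>\<^sub>F n in sequentially. continuous_on policies (\<lambda>\<pi>. \<Sum>i<n. f i \<pi>)"
    proof (intro always_eventually allI)
      fix n
      have "continuous_on UNIV (\<lambda>\<pi>. \<Sum>i<n. f i \<pi>)"
        unfolding f_def by (intro continuous_intros cont_coord cont_state_dist)
      then show "continuous_on policies (\<lambda>\<pi>. \<Sum>i<n. f i \<pi>)"
        by (rule continuous_on_subset) simp
    qed
  qed simp
  moreover have "J T d0 R \<gamma> = (\<lambda>\<pi>. \<Sum>i. f i \<pi>)" by (rule ext) (simp add: J_def f_def)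
  ultimately show ?thesis by simp
qed

lemma J_box_cont:
  assumes T: "is_transition T" and d: "is_dist d0" and g: "0 \<le> \<gamma>" "\<gamma> < 1"
    and w: "w \<in> policies" and e: "e > 0"
  shows "\<exists>\<epsilon>>0. \<forall>\<pi>\<in>policies. \<pi> \<in> pbox w \<epsilon> \<longrightarrow> \<bar>J T d0 R \<gamma> \<pi> - J T d0 R \<gamma> w\<bar> < e"
proof -
  have c: "continuous_on policies (J T d0 R \<gamma>)" by (rule J_cont[OF T d g])
  obtain A where A: "open A" "A \<inter> policies = J T d0 R \<gamma> -` ball (J T d0 R \<gamma> w) e \<inter> policies"
    using c[unfolded continuous_on_open_invariant, rule_format, of "ball (J T d0 R \<gamma> w) e"] by auto
  have "w \<in> A" using A(2) w e by auto
  then obtain \<epsilon> where "\<epsilon> > 0" "pbox w \<epsilon> \<subseteq> A" using open_box[OF A(1)] by blast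
  show ?thesis
  proof (intro exI[of _ \<epsilon>] conjI ballI impI \<open>\<epsilon> > 0\<close>)
    fix \<pi> assume "\<pi> \<in> policies" "\<pi> \<in> pbox w \<epsilon>"
    then have "\<pi> \<in> A \<inter> policies" using \<open>pbox w \<epsilon> \<subseteq> A\<close> by auto
    then have "J T d0 R \<gamma> \<pi> \<in> ball (J T d0 R \<gamma> w) e" using A(2) by auto
    then show "\<bar>J T d0 R \<gamma> \<pi> - J T d0 R \<gamma> w\<bar> < e" by (simp add: dist_real_def abs_minus_commute)
  qed
qed



definition goodF :: "(('s::finite \<Rightarrow> 'a::finite \<Rightarrow> real) \<Rightarrow> real) \<Rightarrow> bool" where
  "goodF F \<longleftrightarrow> (\<forall>p q s0. p \<in> policies \<longrightarrow> q \<in> policies \<longrightarrow> onestate s0 p q \<longrightarrow> mobius_on01 (\<lambda>\<mu>. F (seg p q \<mu>)))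
     \<and> (\<forall>w\<in>policies. \<forall>e>0. \<exists>\<epsilon>>0. \<forall>\<pi>\<in>policies. \<pi> \<in> pbox w \<epsilon> \<longrightarrow> \<bar>F \<pi> - F w\<bar> < e)"

lemma goodF_J:
  fixes T :: "'s::finite \<Rightarrow> 'a::finite \<Rightarrow> 's \<Rightarrow> real"
  assumes "is_transition T" "is_dist d0" "0 \<le> \<gamma>" "\<gamma> < 1"
  shows "goodF (J T d0 R \<gamma>)"
  unfolding goodF_def
proof (intro conjI allI impI ballI)
  fix p q :: "'s \<Rightarrow> 'a \<Rightarrow> real" and s0 assume "p \<in> policies" "q \<in> policies" "onestate s0 p q"
  then show "mobius_on01 (\<lambda>\<mu>. J T d0 R \<gamma> (seg p q \<mu>))" by (rule mobius_J[OF assms])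
next
  fix w :: "'s \<Rightarrow> 'a \<Rightarrow> real" and e :: real assume "w \<in> policies" "e > 0"
  then show "\<exists>\<epsilon>>0. \<forall>\<pi>\<in>policies. \<pi> \<in> pbox w \<epsilon> \<longrightarrow> \<bar>J T d0 R \<gamma> \<pi> - J T d0 R \<gamma> w\<bar> < e"
    by (rule J_box_cont[OF assms])
qed

lemma goodF_mob: "goodF F \<Longrightarrow> p \<in> policies \<Longrightarrow> q \<in> policies \<Longrightarrow> onestate s0 p q \<Longrightarrow> mobius_on01 (\<lambda>\<mu>. F (seg p q \<mu>))"
  unfolding goodF_def by blast

lemma goodF_cont: "goodF F \<Longrightarrow> w \<in> policies \<Longrightarrow> e > 0 \<Longrightarrow> \<exists>\<epsilon>>0. \<forall>\<pi>\<in>policies. \<pi> \<in> pbox w \<epsilon> \<longrightarrow> \<bar>F \<pi> - F w\<bar> < e"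
  unfolding goodF_def by blast

lemma mob_diff:
  fixes \<alpha> \<beta> b x y :: real
  assumes "1 + b*x > 0" "1 + b*y > 0"
  shows "(\<alpha> + \<beta>*y)/(1 + b*y) - (\<alpha> + \<beta>*x)/(1 + b*x) = (\<beta> - \<alpha>*b) * (y - x) / ((1 + b*x) * (1 + b*y))"
  using assms by (simp add: field_simps)

lemma mob_cont:
  assumes "mobius_on01 h" shows "continuous_on {0..1} h"
proof -
  obtain \<alpha> \<beta> b where h: "\<forall>\<mu>\<in>{0..1}. 1 + b*\<mu> > 0 \<and> h \<mu> = (\<alpha> + \<beta>*\<mu>)/(1 + b*\<mu>)"
    using assms unfolding mobius_on01_def by blast
  have "continuous_on {0..1} (\<lambda>\<mu>::real. (\<alpha> + \<beta>*\<mu>)/(1 + b*\<mu>))"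
    using h by (intro continuous_intros) auto
  then show ?thesis by (rule continuous_on_cong[THEN iffD1, rotated 2]) (use h in auto)
qed

lemma onestate_sym: "onestate s p q \<Longrightarrow> onestate s q p"
  unfolding onestate_def by auto

lemma seg_flip: "seg q p \<mu> = seg p q (1 - \<mu>)"
  unfolding seg_def by (auto simp: algebra_simps)

definition rigid :: "(('s::finite \<Rightarrow> 'a::finite \<Rightarrow> real) \<Rightarrow> bool) \<Rightarrow> bool" where
  "rigid Z \<longleftrightarrow> (\<forall>p q s0 \<eta>. p \<in> policies \<longrightarrow> q \<in> policies \<longrightarrow> onestate s0 p q \<longrightarrow> \<eta> > 0 \<longrightarrow>
       (\<forall>\<mu>. 0 < \<mu> \<and> \<mu> < \<eta> \<longrightarrow> Z (seg p q \<mu>)) \<longrightarrow> Z q)"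

lemma quad_zero:
  fixes k0 k1 k2 t :: real
  assumes "t \<noteq> 0" "k0 + k1*t + k2*t^2 = 0" "k0 + k1*(2*t) + k2*(2*t)^2 = 0" "k0 + k1*(3*t) + k2*(3*t)^2 = 0"
  shows "k0 = 0 \<and> k1 = 0 \<and> k2 = 0"
proof -
  define q1 where "q1 = k1*t"
  define q2 where "q2 = k2*t^2"
  have e1: "k0 + q1 + q2 = 0" using assms(2) by (simp add: q1_def q2_def)
  have e2: "k0 + 2*q1 + 4*q2 = 0" using assms(3) by (simp add: q1_def q2_def power2_eq_square algebra_simps)
  have e3: "k0 + 3*q1 + 9*q2 = 0" using assms(4) by (simp add: q1_def q2_def power2_eq_square algebra_simps)
  have "q2 = 0" "q1 = 0" "k0 = 0" using e1 e2 e3 by linarith+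
  then show ?thesis using assms(1) by (simp add: q1_def q2_def)
qed

lemma rigid_bilin:
  assumes g1: "goodF F1" and g2: "goodF F2"
  shows "rigid (\<lambda>\<pi>. A * F1 \<pi> * F2 \<pi> + B * F1 \<pi> + C * F2 \<pi> + D = 0)"
  unfolding rigid_def
proof (intro allI impI)
  fix p q s0 and \<eta> :: real
  assume p: "p \<in> policies" and q: "q \<in> policies" and os: "onestate s0 p q" and eta: "\<eta> > 0"
    and Z: "\<forall>\<mu>. 0 < \<mu> \<and> \<mu> < \<eta> \<longrightarrow> A * F1 (seg p q \<mu>) * F2 (seg p q \<mu>) + B * F1 (seg p q \<mu>) + C * F2 (seg p q \<mu>) + D = 0"
  obtain a1 c1 b1 where h1: "\<forall>\<mu>\<in>{0..1}. 1 + b1*\<mu> > 0 \<and> F1 (seg p q \<mu>) = (a1 + c1*\<mu>)/(1 + b1*\<mu>)"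
    using goodF_mob[OF g1 p q os] unfolding mobius_on01_def by blast
  obtain a2 c2 b2 where h2: "\<forall>\<mu>\<in>{0..1}. 1 + b2*\<mu> > 0 \<and> F2 (seg p q \<mu>) = (a2 + c2*\<mu>)/(1 + b2*\<mu>)"
    using goodF_mob[OF g2 p q os] unfolding mobius_on01_def by blast
  define P where "P \<mu> = A * (a1 + c1*\<mu>) * (a2 + c2*\<mu>) + B * (a1 + c1*\<mu>) * (1 + b2*\<mu>)
      + C * (a2 + c2*\<mu>) * (1 + b1*\<mu>) + D * (1 + b1*\<mu>) * (1 + b2*\<mu>)" for \<mu> :: real
  define k0 where "k0 = A*a1*a2 + B*a1 + C*a2 + D"
  define k1 where "k1 = A*(a1*c2 + c1*a2) + B*(a1*b2 + c1) + C*(a2*b1 + c2) + D*(b1 + b2)"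
  define k2 where "k2 = A*c1*c2 + B*c1*b2 + C*c2*b1 + D*b1*b2"
  have Pk: "P \<mu> = k0 + k1*\<mu> + k2*\<mu>^2" for \<mu>
    unfolding P_def k0_def k1_def k2_def by (simp add: power2_eq_square algebra_simps)
  have Pz: "P \<mu> = 0" if "0 < \<mu>" "\<mu> < \<eta>" "\<mu> \<le> 1" for \<mu>
  proof -
    have m: "\<mu> \<in> {0..1}" using that by auto
    have d1: "1 + b1*\<mu> > 0" and d2: "1 + b2*\<mu> > 0" using h1 h2 m by auto
    have zz: "A * F1 (seg p q \<mu>) * F2 (seg p q \<mu>) + B * F1 (seg p q \<mu>) + C * F2 (seg p q \<mu>) + D = 0"
      using Z that by blast
    have e1: "F1 (seg p q \<mu>) = (a1 + c1*\<mu>)/(1 + b1*\<mu>)" using h1 m by blast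
    have e2: "F2 (seg p q \<mu>) = (a2 + c2*\<mu>)/(1 + b2*\<mu>)" using h2 m by blast
    define X1 where "X1 = (a1 + c1*\<mu>)/(1 + b1*\<mu>)"
    define X2 where "X2 = (a2 + c2*\<mu>)/(1 + b2*\<mu>)"
    have n1: "a1 + c1*\<mu> = X1 * (1 + b1*\<mu>)" unfolding X1_def using d1 by simp
    have n2: "a2 + c2*\<mu> = X2 * (1 + b2*\<mu>)" unfolding X2_def using d2 by simp
    have "A * X1 * X2 + B * X1 + C * X2 + D = 0"
      using zz unfolding e1 e2 X1_def X2_def .
    moreover have "P \<mu> = (A * X1 * X2 + B * X1 + C * X2 + D) * ((1 + b1*\<mu>) * (1 + b2*\<mu>))"
      unfolding P_def n1 n2 by (simp add: algebra_simps)
    ultimately show ?thesis by simp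
  qed
  define t where "t = min \<eta> 1 / 4"
  have t: "t > 0" "3*t < \<eta>" "3*t \<le> 1" using eta unfolding t_def by auto
  have "k0 = 0 \<and> k1 = 0 \<and> k2 = 0"
  proof (rule quad_zero[of t])
    show "t \<noteq> 0" using t by simp
    show "k0 + k1*t + k2*t^2 = 0" using Pz[of t] t Pk[of t] by simp
    show "k0 + k1*(2*t) + k2*(2*t)^2 = 0" using Pz[of "2*t"] t Pk[of "2*t"] by simp
    show "k0 + k1*(3*t) + k2*(3*t)^2 = 0" using Pz[of "3*t"] t Pk[of "3*t"] by simp
  qed
  then have P1: "P 1 = 0" using Pk[of 1] by simp
  have H1: "1 + b1*1 > 0 \<and> F1 (seg p q 1) = (a1 + c1*1)/(1 + b1*1)" by (rule bspec[OF h1]) simp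
  have H2: "1 + b2*1 > 0 \<and> F2 (seg p q 1) = (a2 + c2*1)/(1 + b2*1)" by (rule bspec[OF h2]) simp
  have d1: "1 + b1 > 0" and d2: "1 + b2 > 0" using H1 H2 by auto
  have "F1 q = (a1 + c1)/(1 + b1)" "F2 q = (a2 + c2)/(1 + b2)" using H1 H2 by auto
  then have n1: "a1 + c1*1 = F1 q * (1 + b1*1)" and n2: "a2 + c2*1 = F2 q * (1 + b2*1)" using d1 d2 by auto
  have "P 1 = (A * F1 q * F2 q + B * F1 q + C * F2 q + D) * ((1 + b1*1) * (1 + b2*1))"
    unfolding P_def n1 n2 by (simp add: algebra_simps)
  then show "A * F1 q * F2 q + B * F1 q + C * F2 q + D = 0"
    using P1 d1 d2 by simp
qed

definition mix :: "('s \<Rightarrow> 'b) \<Rightarrow> ('s \<Rightarrow> 'b) \<Rightarrow> 's set \<Rightarrow> 's \<Rightarrow> 'b" where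
  "mix x y F = (\<lambda>s. if s \<in> F then y s else x s)"

definition mixclosed :: "('s \<Rightarrow> 'b) set \<Rightarrow> bool" where
  "mixclosed S \<longleftrightarrow> (\<forall>x y F. x \<in> S \<longrightarrow> y \<in> S \<longrightarrow> mix x y F \<in> S)"

lemma chain_const:
  fixes S :: "('s::finite \<Rightarrow> 'a \<Rightarrow> real) set"
  assumes mc: "mixclosed S"
    and step: "\<And>x y s. x \<in> S \<Longrightarrow> y \<in> S \<Longrightarrow> onestate s x y \<Longrightarrow> \<phi> x = \<phi> y"
    and x: "x \<in> S" and y: "y \<in> S"
  shows "\<phi> x = \<phi> y"
proof -
  have "\<phi> x = \<phi> (mix x y F)" if "finite F" for F
    using that
  proof (induction F rule: finite_induct)
    case empty
    have "mix x y {} = x" by (simp add: mix_def)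
    then show ?case by simp
  next
    case (insert s F)
    have "onestate s (mix x y F) (mix x y (insert s F))"
      unfolding onestate_def mix_def by auto
    then have "\<phi> (mix x y F) = \<phi> (mix x y (insert s F))"
      using step mc x y unfolding mixclosed_def by blast
    then show ?case using insert by simp
  qed
  then have "\<phi> x = \<phi> (mix x y UNIV)" by simp
  moreover have "mix x y UNIV = y" by (simp add: mix_def)
  ultimately show ?thesis by simp
qed

lemma mixclosed_policies: "mixclosed policies"
  unfolding mixclosed_def mix_def policies_def by auto

lemma mixclosed_box: "mixclosed (pbox u r \<inter> policies)"
  unfolding mixclosed_def mix_def policies_def pbox_def by auto

lemma extend:
  fixes Z :: "('s::finite \<Rightarrow> 'a::finite \<Rightarrow> real) \<Rightarrow> bool"
  assumes rg: "rigid Z" and w: "w \<in> policies" and e: "\<epsilon> > 0"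
    and Zb: "\<forall>\<pi>\<in>policies. \<pi> \<in> pbox w \<epsilon> \<longrightarrow> Z \<pi>"
  shows "\<forall>\<pi>\<in>policies. Z \<pi>"
proof -
  have main: "\<forall>\<pi>\<in>policies. (\<forall>s. s \<notin> F \<longrightarrow> (\<forall>a. \<bar>\<pi> s a - w s a\<bar> < \<epsilon>)) \<longrightarrow> Z \<pi>" if "finite F" for F
    using that
  proof (induction F rule: finite_induct)
    case empty
    then show ?case using Zb unfolding pbox_def by auto
  next
    case (insert s0 F)
    show ?case
    proof (intro ballI impI)
      fix \<pi> assume pi: "\<pi> \<in> policies" and cl: "\<forall>s. s \<notin> insert s0 F \<longrightarrow> (\<forall>a. \<bar>\<pi> s a - w s a\<bar> < \<epsilon>)"
      define \<pi>' where "\<pi>' = \<pi>(s0 := w s0)"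
      have pi': "\<pi>' \<in> policies" using pi w unfolding \<pi>'_def policies_def by auto
      have os: "onestate s0 \<pi>' \<pi>" unfolding onestate_def \<pi>'_def by auto
      have "\<forall>\<mu>. 0 < \<mu> \<and> \<mu> < min \<epsilon> 1 \<longrightarrow> Z (seg \<pi>' \<pi> \<mu>)"
      proof (intro allI impI)
        fix \<mu> :: real assume m: "0 < \<mu> \<and> \<mu> < min \<epsilon> 1"
        have sp: "seg \<pi>' \<pi> \<mu> \<in> policies" using seg_policy[OF pi' pi] m by auto
        have "\<forall>s. s \<notin> F \<longrightarrow> (\<forall>a. \<bar>seg \<pi>' \<pi> \<mu> s a - w s a\<bar> < \<epsilon>)"
        proof (intro allI impI)
          fix s a assume sF: "s \<notin> F"
          show "\<bar>seg \<pi>' \<pi> \<mu> s a - w s a\<bar> < \<epsilon>"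
          proof (cases "s = s0")
            case True
            have "seg \<pi>' \<pi> \<mu> s a - w s a = \<mu> * (\<pi> s a - w s a)"
              unfolding seg_def \<pi>'_def using True by (simp add: algebra_simps)
            moreover have "\<bar>\<pi> s a - w s a\<bar> \<le> 1"
              using policy_nonneg[OF pi, of s a] policy_le1[OF pi, of s a] policy_nonneg[OF w, of s a] policy_le1[OF w, of s a]
              by (simp add: abs_le_iff)
            ultimately have "\<bar>seg \<pi>' \<pi> \<mu> s a - w s a\<bar> \<le> \<mu>"
              using m by (simp add: abs_mult mult_left_le_one_le)
            then show ?thesis using m by linarith
          next
            case False
            then have "seg \<pi>' \<pi> \<mu> s a = \<pi> s a" unfolding seg_def \<pi>'_def by (simp add: algebra_simps)
            then show ?thesis using cl sF False by auto
          qed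
        qed
        then show "Z (seg \<pi>' \<pi> \<mu>)" using insert.IH sp by blast
      qed
      then show "Z \<pi>" using rg pi' pi os unfolding rigid_def
        by (meson min_less_iff_conj e zero_less_one min_less_iff_conj)
    qed
  qed
  show ?thesis using main[of UNIV] by simp
qed



lemma mob_form:
  fixes h :: "real \<Rightarrow> real"
  assumes "mobius_on01 h"
  obtains \<alpha> \<beta> b where "\<And>\<mu>. \<mu> \<in> {0..1} \<Longrightarrow> 1 + b*\<mu> > 0" "\<And>\<mu>. \<mu> \<in> {0..1} \<Longrightarrow> h \<mu> = (\<alpha> + \<beta>*\<mu>)/(1 + b*\<mu>)"
  using assms unfolding mobius_on01_def by blast

lemma mob_sign:
  fixes b \<alpha> \<beta> x y :: real and h :: "real \<Rightarrow> real"
  assumes d: "\<And>\<mu>. \<mu> \<in> {0..1} \<Longrightarrow> 1 + b*\<mu> > 0"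
    and h: "\<And>\<mu>. \<mu> \<in> {0..1} \<Longrightarrow> h \<mu> = (\<alpha> + \<beta>*\<mu>)/(1 + b*\<mu>)"
    and xy: "x \<in> {0..1}" "y \<in> {0..1}" "x < y"
  shows "sgn (h y - h x) = sgn (\<beta> - \<alpha>*b)"
proof -
  have dx: "1 + b*x > 0" and dy: "1 + b*y > 0" using d xy by auto
  have "h y - h x = (\<beta> - \<alpha>*b) * (y - x) / ((1 + b*x) * (1 + b*y))"
    unfolding h[OF xy(1)] h[OF xy(2)] by (rule mob_diff[OF dx dy])
  then have e: "h y - h x = (\<beta> - \<alpha>*b) * ((y - x) / ((1 + b*x) * (1 + b*y)))" by simp
  have "(y - x) / ((1 + b*x) * (1 + b*y)) > 0" using dx dy xy by simp
  then have "sgn ((y - x) / ((1 + b*x) * (1 + b*y))) = 1" by (simp only: sgn_pos)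
  then show ?thesis unfolding e sgn_mult by simp
qed

lemma mob_nonconst:
  fixes h :: "real \<Rightarrow> real"
  assumes m: "mobius_on01 h" and xy: "x \<in> {0..1}" "y \<in> {0..1}" "h x \<noteq> h y"
  shows "h 0 \<noteq> h 1"
proof -
  obtain \<alpha> \<beta> b where hh: "\<forall>\<mu>\<in>{0..1}. 1 + b*\<mu> > 0 \<and> h \<mu> = (\<alpha> + \<beta>*\<mu>)/(1 + b*\<mu>)"
    using m unfolding mobius_on01_def by blast
  have d: "\<And>\<mu>. \<mu> \<in> {0..1} \<Longrightarrow> 1 + b*\<mu> > 0" using hh by blast
  have h: "\<And>\<mu>. \<mu> \<in> {0..1} \<Longrightarrow> h \<mu> = (\<alpha> + \<beta>*\<mu>)/(1 + b*\<mu>)" using hh by blast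
  have ne: "\<beta> - \<alpha>*b \<noteq> 0"
  proof
    assume k0: "\<beta> - \<alpha>*b = 0"
    have "x \<noteq> y" using xy(3) by blast
    then have "x < y \<or> y < x" by linarith
    then show False
    proof
      assume "x < y"
      then have "sgn (h y - h x) = 0" using mob_sign[OF d h xy(1,2)] k0 by simp
      then show False using xy(3) by (simp add: sgn_eq_0_iff)
    next
      assume "y < x"
      then have "sgn (h x - h y) = 0" using mob_sign[OF d h xy(2,1)] k0 by simp
      then show False using xy(3) by (simp add: sgn_eq_0_iff)
    qed
  qed
  have "sgn (h 1 - h 0) = sgn (\<beta> - \<alpha>*b)" by (rule mob_sign[OF d h]) auto
  then have "sgn (h 1 - h 0) \<noteq> 0" using ne by (simp add: sgn_eq_0_iff)
  then show ?thesis by (simp add: sgn_eq_0_iff)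
qed



lemma pbox_mono: "\<pi> \<in> pbox w e \<Longrightarrow> e \<le> e' \<Longrightarrow> \<pi> \<in> pbox w e'"
  unfolding pbox_def by (auto intro: less_le_trans)

lemma local_step:
  fixes F1 F2 :: "('s::finite \<Rightarrow> 'a::finite \<Rightarrow> real) \<Rightarrow> real" and P :: "('s \<Rightarrow> 'a \<Rightarrow> real) set"
  assumes g1: "goodF F1" and g2: "goodF F2" and PP: "P \<subseteq> policies"
    and ni: "\<forall>\<pi>\<in>P. \<forall>\<pi>'\<in>P. \<not> (F1 \<pi> > F1 \<pi>' \<and> F2 \<pi>' > F2 \<pi>)"
    and p: "p \<in> policies" and q: "q \<in> policies" and os: "onestate s0 p q"
    and segP: "\<forall>\<mu>\<in>{0..1}. seg p q \<mu> \<in> P"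
    and ep: "\<epsilon> > 0" and boxP: "\<forall>\<pi>\<in>policies. \<pi> \<in> pbox (seg p q (1/2)) \<epsilon> \<longrightarrow> \<pi> \<in> P"
    and inc: "F2 p < F2 q"
    and nt1: "\<exists>x\<in>policies. \<exists>y\<in>policies. F1 x \<noteq> F1 y"
  shows "\<forall>x\<in>policies. \<forall>y\<in>policies. (F1 x \<ge> F1 y \<longleftrightarrow> F2 x \<ge> F2 y)"
proof -
  define f where "f \<mu> = F1 (seg p q \<mu>)" for \<mu>
  define g where "g \<mu> = F2 (seg p q \<mu>)" for \<mu>
  have mf: "mobius_on01 f" using goodF_mob[OF g1 p q os] unfolding f_def .
  have mg: "mobius_on01 g" using goodF_mob[OF g2 p q os] unfolding g_def .
  obtain a1 c1 b1 where hh1: "\<forall>\<mu>\<in>{0..1}. 1 + b1*\<mu> > 0 \<and> f \<mu> = (a1 + c1*\<mu>)/(1 + b1*\<mu>)"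
    using mf unfolding mobius_on01_def by blast
  obtain a2 c2 b2 where hh2: "\<forall>\<mu>\<in>{0..1}. 1 + b2*\<mu> > 0 \<and> g \<mu> = (a2 + c2*\<mu>)/(1 + b2*\<mu>)"
    using mg unfolding mobius_on01_def by blast
  have d1: "\<And>\<mu>. \<mu> \<in> {0..1} \<Longrightarrow> 1 + b1*\<mu> > 0" using hh1 by blast
  have fe: "\<And>\<mu>. \<mu> \<in> {0..1} \<Longrightarrow> f \<mu> = (a1 + c1*\<mu>)/(1 + b1*\<mu>)" using hh1 by blast
  have d2: "\<And>\<mu>. \<mu> \<in> {0..1} \<Longrightarrow> 1 + b2*\<mu> > 0" using hh2 by blast
  have ge: "\<And>\<mu>. \<mu> \<in> {0..1} \<Longrightarrow> g \<mu> = (a2 + c2*\<mu>)/(1 + b2*\<mu>)" using hh2 by blast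
  define k1 where "k1 = c1 - a1*b1"
  define k2 where "k2 = c2 - a2*b2"
  have fs: "sgn (f y - f x) = sgn k1" if "x \<in> {0..1}" "y \<in> {0..1}" "x < y" for x y
    unfolding k1_def by (rule mob_sign[OF d1 fe that])
  have gs: "sgn (g y - g x) = sgn k2" if "x \<in> {0..1}" "y \<in> {0..1}" "x < y" for x y
    unfolding k2_def by (rule mob_sign[OF d2 ge that])
  have f0: "f 0 = F1 p" and f1: "f 1 = F1 q" and g0: "g 0 = F2 p" and g1': "g 1 = F2 q"
    by (simp_all add: f_def g_def)
  have "sgn (g 1 - g 0) = sgn k2" by (rule gs) auto
  moreover have "sgn (g 1 - g 0) = 1" using inc g0 g1' by simp
  ultimately have k2: "k2 > 0" by (simp add: sgn_1_pos)
  have gmono: "g x < g y" if "x \<in> {0..1}" "y \<in> {0..1}" "x < y" for x y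
  proof -
    have "sgn (g y - g x) = 1" using gs[OF that] k2 by simp
    then show ?thesis by (simp add: sgn_1_pos)
  qed
  have pP: "p \<in> P" using bspec[OF segP, of 0] by simp
  have qP: "q \<in> P" using bspec[OF segP, of 1] by simp
  define w where "w = seg p q (1/2)"
  have wpol: "w \<in> policies" unfolding w_def by (rule seg_policy[OF p q]) auto
  define e where "e = min (g (1/2) - g 0) (g 1 - g (1/2))"
  have e: "e > 0" unfolding e_def using gmono[of 0 "1/2"] gmono[of "1/2" 1] by auto
  obtain \<epsilon>1 where \<epsilon>1: "\<epsilon>1 > 0" "\<forall>\<pi>\<in>policies. \<pi> \<in> pbox w \<epsilon>1 \<longrightarrow> \<bar>F2 \<pi> - F2 w\<bar> < e"
    using goodF_cont[OF g2 wpol e] by blast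
  define \<epsilon>2 where "\<epsilon>2 = min \<epsilon> \<epsilon>1"
  have \<epsilon>2: "\<epsilon>2 > 0" unfolding \<epsilon>2_def using ep \<epsilon>1 by simp
  have inbox: "\<pi> \<in> P \<and> g 0 < F2 \<pi> \<and> F2 \<pi> < g 1" if "\<pi> \<in> policies" "\<pi> \<in> pbox w \<epsilon>2" for \<pi>
  proof -
    have "\<pi> \<in> pbox w \<epsilon>" using pbox_mono[OF that(2)] unfolding \<epsilon>2_def by simp
    then have "\<pi> \<in> P" using boxP that(1) unfolding w_def by blast
    moreover have "\<pi> \<in> pbox w \<epsilon>1" using pbox_mono[OF that(2)] unfolding \<epsilon>2_def by simp
    then have "\<bar>F2 \<pi> - g (1/2)\<bar> < e" using \<epsilon>1(2) that(1) unfolding w_def g_def by blast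
    then have "g 0 < F2 \<pi> \<and> F2 \<pi> < g 1" unfolding e_def by linarith
    ultimately show ?thesis by blast
  qed
  consider (neg) "k1 < 0" | (zero) "k1 = 0" | (pos) "k1 > 0" by linarith
  then show ?thesis
  proof cases
    case neg
    have "sgn (f 1 - f 0) = sgn k1" by (rule fs) auto
    then have "f 1 < f 0" using neg by (simp add: sgn_if split: if_splits)
    then have "F1 p > F1 q \<and> F2 q > F2 p" using f0 f1 inc by simp
    then show ?thesis using ni pP qP by blast
  next
    case zero
    have fc: "f \<mu> = f 0" if "\<mu> \<in> {0..1}" for \<mu>
    proof (cases "\<mu> = 0")
      case True then show ?thesis by simp
    next
      case False
      then have "0 < \<mu>" using that by simp
      then have "sgn (f \<mu> - f 0) = sgn k1" using fs[of 0 \<mu>] that by simp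
      then show ?thesis using zero by (simp add: sgn_eq_0_iff)
    qed
    have fq: "F1 q = f 0" using fc[of 1] f1 by simp
    have Zb: "\<forall>\<pi>\<in>policies. \<pi> \<in> pbox w \<epsilon>2 \<longrightarrow> 0 * F1 \<pi> * F2 \<pi> + 1 * F1 \<pi> + 0 * F2 \<pi> + (- f 0) = 0"
    proof (intro ballI impI)
      fix \<pi> assume pi: "\<pi> \<in> policies" "\<pi> \<in> pbox w \<epsilon>2"
      have ib: "\<pi> \<in> P" "g 0 < F2 \<pi>" "F2 \<pi> < g 1" using inbox[OF pi] by auto
      have "\<not> F1 \<pi> > f 0"
      proof
        assume "F1 \<pi> > f 0"
        then have "F1 \<pi> > F1 q \<and> F2 q > F2 \<pi>" using fq ib g1' by simp
        then show False using ni ib(1) qP by blast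
      qed
      moreover have "\<not> F1 \<pi> < f 0"
      proof
        assume "F1 \<pi> < f 0"
        then have "F1 p > F1 \<pi> \<and> F2 \<pi> > F2 p" using f0 ib g0 by simp
        then show False using ni ib(1) pP by blast
      qed
      ultimately show "0 * F1 \<pi> * F2 \<pi> + 1 * F1 \<pi> + 0 * F2 \<pi> + (- f 0) = 0" by simp
    qed
    have "\<forall>\<pi>\<in>policies. 0 * F1 \<pi> * F2 \<pi> + 1 * F1 \<pi> + 0 * F2 \<pi> + (- f 0) = 0"
      by (rule extend[OF rigid_bilin[OF g1 g2] wpol \<epsilon>2 Zb])
    then have "\<forall>\<pi>\<in>policies. F1 \<pi> = f 0" by simp
    then show ?thesis using nt1 by auto
  next
    case pos
    define cc where "cc = b1 - b2"
    define dd where "dd = c2 - b1*a2"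
    define aa where "aa = c1 - a1*b2"
    define bb where "bb = a1*c2 - c1*a2"
    have Qseg: "f \<mu> * (cc * g \<mu> + dd) - (aa * g \<mu> + bb) = 0" if m: "\<mu> \<in> {0..1}" for \<mu>
    proof -
      have D1: "1 + b1*\<mu> > 0" and D2: "1 + b2*\<mu> > 0" using d1[OF m] d2[OF m] by auto
      define X1 where "X1 = f \<mu>"
      define X2 where "X2 = g \<mu>"
      have n1: "a1 + c1*\<mu> = X1 * (1 + b1*\<mu>)" unfolding X1_def fe[OF m] using D1 by simp
      have n2: "a2 + c2*\<mu> = X2 * (1 + b2*\<mu>)" unfolding X2_def ge[OF m] using D2 by simp
      have i1: "cc * (a2 + c2*\<mu>) + dd * (1 + b2*\<mu>) = k2 * (1 + b1*\<mu>)"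
        unfolding cc_def dd_def k2_def by (simp add: algebra_simps)
      have i2: "aa * (a2 + c2*\<mu>) + bb * (1 + b2*\<mu>) = k2 * (a1 + c1*\<mu>)"
        unfolding aa_def bb_def k2_def by (simp add: algebra_simps)
      have "(X1 * (cc * X2 + dd) - (aa * X2 + bb)) * (1 + b2*\<mu>)
          = X1 * (cc * (X2 * (1 + b2*\<mu>)) + dd * (1 + b2*\<mu>)) - (aa * (X2 * (1 + b2*\<mu>)) + bb * (1 + b2*\<mu>))"
        by (simp add: algebra_simps)
      also have "\<dots> = X1 * (k2 * (1 + b1*\<mu>)) - k2 * (a1 + c1*\<mu>)"
        unfolding n2[symmetric] i1 i2 ..
      also have "\<dots> = 0" unfolding n1 by (simp add: algebra_simps)
      finally have "(X1 * (cc * X2 + dd) - (aa * X2 + bb)) * (1 + b2*\<mu>) = 0" .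
      then show ?thesis using D2 unfolding X1_def X2_def by simp
    qed
    have gcont: "continuous_on {0..1} g" by (rule mob_cont[OF mg])
    have fcont: "continuous_on {0..1} f" by (rule mob_cont[OF mf])
    have bil: "cc * X * Y + dd * X + - aa * Y + - bb = X * (cc * Y + dd) - (aa * Y + bb)" for X Y :: real
      by (simp add: algebra_simps)
    have Zb: "\<forall>\<pi>\<in>policies. \<pi> \<in> pbox w \<epsilon>2 \<longrightarrow> cc * F1 \<pi> * F2 \<pi> + dd * F1 \<pi> + - aa * F2 \<pi> + - bb = 0"
    proof (intro ballI impI)
      fix \<pi> assume pi: "\<pi> \<in> policies" "\<pi> \<in> pbox w \<epsilon>2"
      have ib: "\<pi> \<in> P" "g 0 < F2 \<pi>" "F2 \<pi> < g 1" using inbox[OF pi] by auto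
      obtain \<mu> where mu: "0 \<le> \<mu>" "\<mu> \<le> 1" "g \<mu> = F2 \<pi>"
        using IVT'[of g 0 "F2 \<pi>" 1, OF _ _ _ gcont] ib by auto
      have mu0: "\<mu> \<noteq> 0" using mu ib by auto
      have mu1: "\<mu> \<noteq> 1" using mu ib by auto
      have m01: "\<mu> \<in> {0..1}" using mu by simp
      have "F1 \<pi> = f \<mu>"
      proof (rule ccontr)
        assume ne: "F1 \<pi> \<noteq> f \<mu>"
        define gap where "gap = \<bar>F1 \<pi> - f \<mu>\<bar>"
        have gap: "gap > 0" using ne unfolding gap_def by simp
        obtain dl where dl: "dl > 0" "\<forall>x'\<in>{0..1}. dist x' \<mu> < dl \<longrightarrow> dist (f x') (f \<mu>) < gap"
          using fcont[unfolded continuous_on_iff, rule_format, OF m01 gap] by blast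
        show False
        proof (cases "F1 \<pi> > f \<mu>")
          case True
          define \<mu>' where "\<mu>' = \<mu> + min (dl/2) ((1 - \<mu>)/2)"
          have t1: "min (dl/2) ((1 - \<mu>)/2) > 0" using mu mu1 dl by simp
          have t2: "min (dl/2) ((1 - \<mu>)/2) \<le> (1 - \<mu>)/2" by (rule min.cobounded2)
          have t3: "min (dl/2) ((1 - \<mu>)/2) \<le> dl/2" by (rule min.cobounded1)
          note t = t1 t2 t3
          have m': "\<mu>' \<in> {0..1}" "\<mu> < \<mu>'" "dist \<mu>' \<mu> < dl"
            unfolding \<mu>'_def dist_real_def atLeastAtMost_iff using mu dl t by auto
          have "dist (f \<mu>') (f \<mu>) < gap" using dl(2) m' by blast
          then have "f \<mu>' < F1 \<pi>" using True unfolding gap_def dist_real_def by linarith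
          moreover have "g \<mu>' > F2 \<pi>" using gmono[OF m01 m'(1) m'(2)] mu by simp
          moreover have "seg p q \<mu>' \<in> P" using segP m'(1) by blast
          ultimately show False using ni ib(1) unfolding f_def g_def by blast
        next
          case False
          then have lt: "F1 \<pi> < f \<mu>" using ne by simp
          define \<mu>' where "\<mu>' = \<mu> - min (dl/2) (\<mu>/2)"
          have t1: "min (dl/2) (\<mu>/2) > 0" using mu mu0 dl by simp
          have t2: "min (dl/2) (\<mu>/2) \<le> \<mu>/2" by (rule min.cobounded2)
          have t3: "min (dl/2) (\<mu>/2) \<le> dl/2" by (rule min.cobounded1)
          note t = t1 t2 t3
          have m': "\<mu>' \<in> {0..1}" "\<mu>' < \<mu>" "dist \<mu>' \<mu> < dl"
            unfolding \<mu>'_def dist_real_def atLeastAtMost_iff using mu dl t by auto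
          have "dist (f \<mu>') (f \<mu>) < gap" using dl(2) m' by blast
          then have "f \<mu>' > F1 \<pi>" using lt unfolding gap_def dist_real_def by linarith
          moreover have "g \<mu>' < F2 \<pi>" using gmono[OF m'(1) m01 m'(2)] mu by simp
          moreover have "seg p q \<mu>' \<in> P" using segP m'(1) by blast
          ultimately show False using ni ib(1) unfolding f_def g_def by blast
        qed
      qed
      then have "F1 \<pi> * (cc * F2 \<pi> + dd) - (aa * F2 \<pi> + bb) = 0" using Qseg[OF m01] mu(3) by simp
      then show "cc * F1 \<pi> * F2 \<pi> + dd * F1 \<pi> + - aa * F2 \<pi> + - bb = 0" unfolding bil .
    qed
    have Qall: "\<forall>\<pi>\<in>policies. cc * F1 \<pi> * F2 \<pi> + dd * F1 \<pi> + - aa * F2 \<pi> + - bb = 0"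
      by (rule extend[OF rigid_bilin[OF g1 g2] wpol \<epsilon>2 Zb])
    define DF where "DF \<pi> = cc * F2 \<pi> + dd" for \<pi>
    have QQ: "F1 \<pi> * DF \<pi> = aa * F2 \<pi> + bb" if "\<pi> \<in> policies" for \<pi>
    proof -
      have "cc * F1 \<pi> * F2 \<pi> + dd * F1 \<pi> + - aa * F2 \<pi> + - bb = 0" using Qall that by blast
      then show ?thesis unfolding bil DF_def by simp
    qed
    define det where "det = aa*dd - bb*cc"
    have det: "det = k1 * k2" unfolding det_def aa_def bb_def cc_def dd_def k1_def k2_def
      by (simp add: algebra_simps)
    have detp: "det > 0" unfolding det using pos k2 by simp
    have Dnz: "DF \<pi> \<noteq> 0" if "\<pi> \<in> policies" for \<pi>
    proof
      assume z: "DF \<pi> = 0"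
      then have z2: "aa * F2 \<pi> + bb = 0" using QQ[OF that] by simp
      have z1: "cc * F2 \<pi> + dd = 0" using z unfolding DF_def .
      have "dd * (aa * F2 \<pi> + bb) - bb * (cc * F2 \<pi> + dd) = det * F2 \<pi>"
        unfolding det_def by (simp add: algebra_simps)
      then have "det * F2 \<pi> = 0" using z1 z2 by simp
      then have "F2 \<pi> = 0" using detp by simp
      then have "bb = 0" "dd = 0" using z1 z2 by auto
      then show False using detp unfolding det_def by simp
    qed
    have Dsign: "(DF x > 0) = (DF y > 0)" if "x \<in> policies" "y \<in> policies" for x y
    proof (rule chain_const[OF mixclosed_policies _ that])
      fix x y :: "'s \<Rightarrow> 'a \<Rightarrow> real" and s
      assume x: "x \<in> policies" and y: "y \<in> policies" and osxy: "onestate s x y"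
      define h where "h \<mu> = cc * F2 (seg x y \<mu>) + dd" for \<mu>
      have "continuous_on {0..1} (\<lambda>\<mu>. F2 (seg x y \<mu>))" by (rule mob_cont[OF goodF_mob[OF g2 x y osxy]])
      then have hc: "continuous_on {0..1} h" unfolding h_def by (intro continuous_intros)
      have h0: "h 0 = DF x" and h1: "h 1 = DF y" by (simp_all add: h_def DF_def)
      have hnz: "h \<mu> \<noteq> 0" if "0 \<le> \<mu>" "\<mu> \<le> 1" for \<mu>
        using Dnz[OF seg_policy[OF x y that]] unfolding h_def DF_def .
      show "(DF x > 0) = (DF y > 0)"
      proof (rule ccontr)
        assume "(DF x > 0) \<noteq> (DF y > 0)"
        then consider "DF x > 0" "DF y \<le> 0" | "DF x \<le> 0" "DF y > 0" by linarith
        then show False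
        proof cases
          case 1
          then obtain \<mu> where "0 \<le> \<mu>" "\<mu> \<le> 1" "h \<mu> = 0"
            using IVT2'[of h 1 0 0, OF _ _ _ hc] h0 h1 by auto
          then show False using hnz by blast
        next
          case 2
          then obtain \<mu> where "0 \<le> \<mu>" "\<mu> \<le> 1" "h \<mu> = 0"
            using IVT'[of h 0 0 1, OF _ _ _ hc] h0 h1 by auto
          then show False using hnz by blast
        qed
      qed
    qed
    show ?thesis
    proof (intro ballI)
      fix x y :: "'s \<Rightarrow> 'a \<Rightarrow> real" assume x: "x \<in> policies" and y: "y \<in> policies"
      have DD: "DF x * DF y > 0"
      proof -
        have "DF x \<noteq> 0" "DF y \<noteq> 0" using Dnz x y by auto
        moreover have "(DF x > 0) = (DF y > 0)" using Dsign[OF x y] .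
        ultimately show ?thesis by (auto simp: zero_less_mult_iff)
      qed
      have key: "(F1 x - F1 y) * (DF x * DF y) = det * (F2 x - F2 y)"
      proof -
        have "(F1 x - F1 y) * (DF x * DF y) = (F1 x * DF x) * DF y - (F1 y * DF y) * DF x"
          by (simp add: algebra_simps)
        also have "\<dots> = (aa * F2 x + bb) * DF y - (aa * F2 y + bb) * DF x"
          unfolding QQ[OF x] QQ[OF y] ..
        also have "\<dots> = det * (F2 x - F2 y)"
          unfolding DF_def det_def by (simp add: algebra_simps)
        finally show ?thesis .
      qed
      have aux1: "(0 \<le> z * c) = (0 \<le> z)" if "c > 0" for z c :: real
        using that by (simp add: zero_le_mult_iff)
      have aux2: "(0 \<le> c * z) = (0 \<le> z)" if "c > 0" for z c :: real
        using that by (simp add: zero_le_mult_iff)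
      have "F1 x \<ge> F1 y \<longleftrightarrow> (F1 x - F1 y) * (DF x * DF y) \<ge> 0"
        unfolding aux1[OF DD] by simp
      also have "\<dots> \<longleftrightarrow> det * (F2 x - F2 y) \<ge> 0" unfolding key ..
      also have "\<dots> \<longleftrightarrow> F2 x \<ge> F2 y" unfolding aux2[OF detp] by simp
      finally show "F1 x \<ge> F1 y \<longleftrightarrow> F2 x \<ge> F2 y" .
    qed
  qed
qed



lemma main_abstract:
  fixes F1 F2 :: "('s::finite \<Rightarrow> 'a::finite \<Rightarrow> real) \<Rightarrow> real" and P :: "('s \<Rightarrow> 'a \<Rightarrow> real) set"
  assumes g1: "goodF F1" and g2: "goodF F2" and PP: "P \<subseteq> policies"
    and ni: "\<forall>\<pi>\<in>P. \<forall>\<pi>'\<in>P. \<not> (F1 \<pi> > F1 \<pi>' \<and> F2 \<pi>' > F2 \<pi>)"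
    and u: "u \<in> policies" and e0: "\<epsilon>0 > 0" and ub: "\<forall>s a. u s a \<ge> \<epsilon>0"
    and boxu: "\<forall>\<pi>\<in>policies. \<pi> \<in> pbox u \<epsilon>0 \<longrightarrow> \<pi> \<in> P"
    and nt1: "\<exists>x\<in>policies. \<exists>y\<in>policies. F1 x \<noteq> F1 y"
    and nt2: "\<exists>x\<in>policies. \<exists>y\<in>policies. F2 x \<noteq> F2 y"
  shows "\<forall>x\<in>policies. \<forall>y\<in>policies. (F1 x \<ge> F1 y \<longleftrightarrow> F2 x \<ge> F2 y)"
proof -
  define r where "r = \<epsilon>0/3"
  have r: "r > 0" unfolding r_def using e0 by simp
  have uin: "u \<in> pbox u r \<inter> policies" using u r unfolding pbox_def by simp
  have "\<exists>x\<in>pbox u r \<inter> policies. F2 x \<noteq> F2 u"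
  proof (rule ccontr)
    assume "\<not> (\<exists>x\<in>pbox u r \<inter> policies. F2 x \<noteq> F2 u)"
    then have Zb: "\<forall>\<pi>\<in>policies. \<pi> \<in> pbox u r \<longrightarrow> 0 * F1 \<pi> * F2 \<pi> + 0 * F1 \<pi> + 1 * F2 \<pi> + (- F2 u) = 0"
      by auto
    have "\<forall>\<pi>\<in>policies. 0 * F1 \<pi> * F2 \<pi> + 0 * F1 \<pi> + 1 * F2 \<pi> + (- F2 u) = 0"
      by (rule extend[OF rigid_bilin[OF g1 g2] u r Zb])
    then have "\<forall>\<pi>\<in>policies. F2 \<pi> = F2 u" by simp
    then show False using nt2 by auto
  qed
  then obtain x0 where x0: "x0 \<in> pbox u r \<inter> policies" "F2 x0 \<noteq> F2 u" by blast
  have "\<exists>x y s. x \<in> pbox u r \<inter> policies \<and> y \<in> pbox u r \<inter> policies \<and> onestate s x y \<and> F2 x \<noteq> F2 y"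
  proof (rule ccontr)
    assume "\<not> ?thesis"
    then have st: "\<And>x y s. x \<in> pbox u r \<inter> policies \<Longrightarrow> y \<in> pbox u r \<inter> policies \<Longrightarrow> onestate s x y \<Longrightarrow> F2 x = F2 y"
      by blast
    have "F2 x0 = F2 u" by (rule chain_const[OF mixclosed_box st x0(1) uin])
    then show False using x0(2) by simp
  qed
  then obtain x y s where x: "x \<in> pbox u r \<inter> policies" and y: "y \<in> pbox u r \<inter> policies"
    and os: "onestate s x y" and ne: "F2 x \<noteq> F2 y" by blast
  have xp: "x \<in> policies" and yp: "y \<in> policies" using x y by auto
  have xr: "\<bar>x s a - u s a\<bar> < r" for s a using x unfolding pbox_def by blast
  have yr: "\<bar>y s a - u s a\<bar> < r" for s a using y unfolding pbox_def by blast
  define p0 where "p0 = (\<lambda>s a. 2 * x s a - y s a)"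
  have segeq: "seg p0 y \<mu> s a = (2 - 2*\<mu>) * x s a + (2*\<mu> - 1) * y s a" for \<mu> s a
    unfolding seg_def p0_def by (simp add: algebra_simps)
  have seg_close: "\<bar>seg p0 y \<mu> s a - u s a\<bar> < \<epsilon>0" if m: "\<mu> \<in> {0..1}" for \<mu> s a
  proof -
    have "seg p0 y \<mu> s a - u s a = (2 - 2*\<mu>) * (x s a - u s a) + (2*\<mu> - 1) * (y s a - u s a)"
      unfolding segeq by (simp add: algebra_simps)
    then have "\<bar>seg p0 y \<mu> s a - u s a\<bar> \<le> \<bar>2 - 2*\<mu>\<bar> * \<bar>x s a - u s a\<bar> + \<bar>2*\<mu> - 1\<bar> * \<bar>y s a - u s a\<bar>"
      using abs_triangle_ineq[of "(2 - 2*\<mu>) * (x s a - u s a)" "(2*\<mu> - 1) * (y s a - u s a)"]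
      by (simp add: abs_mult)
    also have "\<dots> \<le> 2 * \<bar>x s a - u s a\<bar> + 1 * \<bar>y s a - u s a\<bar>"
    proof (rule add_mono)
      show "\<bar>2 - 2*\<mu>\<bar> * \<bar>x s a - u s a\<bar> \<le> 2 * \<bar>x s a - u s a\<bar>"
        by (rule mult_right_mono) (use m in auto)
      show "\<bar>2*\<mu> - 1\<bar> * \<bar>y s a - u s a\<bar> \<le> 1 * \<bar>y s a - u s a\<bar>"
        by (rule mult_right_mono) (use m in auto)
    qed
    also have "\<dots> < \<epsilon>0"
    proof -
      have lin: "\<And>A B::real. A < \<epsilon>0/3 \<Longrightarrow> B < \<epsilon>0/3 \<Longrightarrow> 2 * A + 1 * B < \<epsilon>0" by linarith
      show ?thesis by (rule lin) (use xr[of s a] yr[of s a] in \<open>simp_all add: r_def\<close>)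
    qed
    finally show ?thesis .
  qed
  have seg_pol: "seg p0 y \<mu> \<in> policies" if m: "\<mu> \<in> {0..1}" for \<mu>
  proof -
    have "is_dist (seg p0 y \<mu> s)" for s
    proof -
      have "seg p0 y \<mu> s a \<ge> 0" for a
      proof -
        have "\<bar>seg p0 y \<mu> s a - u s a\<bar> < \<epsilon>0" by (rule seg_close[OF m])
        moreover have "u s a \<ge> \<epsilon>0" using ub by blast
        ultimately show ?thesis unfolding abs_less_iff by linarith
      qed
      moreover have "(\<Sum>a\<in>UNIV. seg p0 y \<mu> s a) = (2 - 2*\<mu>) * (\<Sum>a\<in>UNIV. x s a) + (2*\<mu> - 1) * (\<Sum>a\<in>UNIV. y s a)"
        unfolding segeq by (simp add: sum.distrib sum_distrib_left)
      ultimately show ?thesis using policy_sum[OF xp] policy_sum[OF yp] by (simp add: is_dist_def)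
    qed
    then show ?thesis by (simp add: policies_def)
  qed
  have segP: "\<forall>\<mu>\<in>{0..1}. seg p0 y \<mu> \<in> P"
  proof
    fix \<mu> :: real assume m: "\<mu> \<in> {0..1}"
    have "seg p0 y \<mu> \<in> pbox u \<epsilon>0" using seg_close[OF m] unfolding pbox_def by blast
    then show "seg p0 y \<mu> \<in> P" using boxu seg_pol[OF m] by blast
  qed
  have p0p: "p0 \<in> policies" using seg_pol[of 0] by simp
  have osp: "onestate s p0 y"
    unfolding onestate_def
  proof (intro allI impI)
    fix s' assume "s' \<noteq> s"
    then have "x s' = y s'" using os unfolding onestate_def by blast
    then show "p0 s' = y s'" unfolding p0_def by (auto simp: fun_eq_iff)
  qed
  have half: "seg p0 y (1/2) = x" unfolding seg_def p0_def by (auto simp: fun_eq_iff algebra_simps)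
  have boxP: "\<forall>\<pi>\<in>policies. \<pi> \<in> pbox x r \<longrightarrow> \<pi> \<in> P"
  proof (intro ballI impI)
    fix \<pi> assume pi: "\<pi> \<in> policies" "\<pi> \<in> pbox x r"
    have "\<bar>\<pi> s a - u s a\<bar> < \<epsilon>0" for s a
    proof -
      have "\<bar>\<pi> s a - x s a\<bar> < r" using pi(2) unfolding pbox_def by blast
      moreover have "\<bar>\<pi> s a - u s a\<bar> \<le> \<bar>\<pi> s a - x s a\<bar> + \<bar>x s a - u s a\<bar>" using abs_triangle_ineq[of "\<pi> s a - x s a" "x s a - u s a"] by simp
      ultimately show ?thesis using xr[of s a] e0 unfolding r_def by linarith
    qed
    then have "\<pi> \<in> pbox u \<epsilon>0" unfolding pbox_def by blast
    then show "\<pi> \<in> P" using boxu pi(1) by blast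
  qed
  have mh: "mobius_on01 (\<lambda>\<mu>. F2 (seg p0 y \<mu>))" by (rule goodF_mob[OF g2 p0p yp osp])
  have "F2 (seg p0 y (1/2)) \<noteq> F2 (seg p0 y 1)" using ne half by simp
  then have "F2 (seg p0 y 0) \<noteq> F2 (seg p0 y 1)"
    using mob_nonconst[OF mh, of "1/2" 1] by simp
  then have ne2: "F2 p0 \<noteq> F2 y" by simp
  show ?thesis
  proof (cases "F2 p0 < F2 y")
    case True
    show ?thesis
      by (rule local_step[OF g1 g2 PP ni p0p yp osp segP r _ True nt1]) (use boxP half in simp)
  next
    case False
    then have lt: "F2 y < F2 p0" using ne2 by simp
    have segP': "\<forall>\<mu>\<in>{0..1}. seg y p0 \<mu> \<in> P"
    proof
      fix \<mu> :: real assume "\<mu> \<in> {0..1}"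
      then have "1 - \<mu> \<in> {0..1}" by auto
      then show "seg y p0 \<mu> \<in> P" using segP unfolding seg_flip[of y p0] by blast
    qed
    have half': "seg y p0 (1/2) = x" unfolding seg_flip[of y p0] using half by simp
    show ?thesis
      by (rule local_step[OF g1 g2 PP ni yp p0p onestate_sym[OF osp] segP' r _ lt nt1]) (use boxP half' in simp)
  qed
qed



theorem mainTheorem10:
  fixes T1 T2 :: "'s::finite \<Rightarrow> 'a::finite \<Rightarrow> 's \<Rightarrow> real"
    and R1 R2 :: "'s \<Rightarrow> 'a \<Rightarrow> real"
    and d0 :: "'s \<Rightarrow> real" and \<gamma> :: real
    and P U :: "('s \<Rightarrow> 'a \<Rightarrow> real) set"
  assumes "CARD('a) > 1"
    and "valid_mdp T1 d0 \<gamma>" and "valid_mdp T2 d0 \<gamma>"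
    and "T1 = T2 \<or> R1 = R2"
    and "P \<subseteq> policies"
    and "U \<noteq> {}" and "U \<subseteq> P" and "openin (top_of_set policies_pos) U"
    and "\<not> trivial_on (J T1 d0 R1 \<gamma>) P" and "\<not> trivial_on (J T2 d0 R2 \<gamma>) P"
    and "\<not> equivalent_on (J T1 d0 R1 \<gamma>) (J T2 d0 R2 \<gamma>) P"
  shows "\<exists>\<pi>\<in>P. \<exists>\<pi>'\<in>P. J T1 d0 R1 \<gamma> \<pi> > J T1 d0 R1 \<gamma> \<pi>'
                       \<and> J T2 d0 R2 \<gamma> \<pi>' > J T2 d0 R2 \<gamma> \<pi>"
proof (rule ccontr)
  assume nex: "\<not> ?thesis"
  have v1: "is_transition T1" "is_dist d0" "0 \<le> \<gamma>" "\<gamma> < 1" using assms(2) by (auto simp: valid_mdp_def)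
  have v2: "is_transition T2" using assms(3) by (auto simp: valid_mdp_def)
  have g1: "goodF (J T1 d0 R1 \<gamma>)" by (rule goodF_J[OF v1])
  have g2: "goodF (J T2 d0 R2 \<gamma>)" by (rule goodF_J[OF v2 v1(2-4)])
  have PP: "P \<subseteq> policies" by (rule assms(5))
  have ni: "\<forall>\<pi>\<in>P. \<forall>\<pi>'\<in>P. \<not> (J T1 d0 R1 \<gamma> \<pi> > J T1 d0 R1 \<gamma> \<pi>' \<and> J T2 d0 R2 \<gamma> \<pi>' > J T2 d0 R2 \<gamma> \<pi>)"
    using nex by blast
  obtain u where uU: "u \<in> U" using assms(6) by blast
  obtain TT where TT: "open TT" "U = policies_pos \<inter> TT"
    using assms(8) unfolding openin_open by blast
  have upos: "u \<in> policies_pos" and uT: "u \<in> TT" using uU TT(2) by auto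
  have u: "u \<in> policies" using upos unfolding policies_pos_def by blast
  obtain \<epsilon> where \<epsilon>: "\<epsilon> > 0" "pbox u \<epsilon> \<subseteq> TT" using open_box[OF TT(1) uT] by blast
  define m where "m = Min (range (\<lambda>(s, a). u s a))"
  have "m \<in> range (\<lambda>(s, a). u s a)" unfolding m_def by (rule Min_in) auto
  then have mpos: "m > 0" using upos unfolding policies_pos_def by auto
  have mle: "m \<le> u s a" for s a
  proof -
    have "m \<le> (\<lambda>(s, a). u s a) (s, a)" unfolding m_def by (rule Min_le) auto
    then show ?thesis by simp
  qed
  define \<epsilon>0 where "\<epsilon>0 = min \<epsilon> m"
  have e0: "\<epsilon>0 > 0" unfolding \<epsilon>0_def using \<epsilon> mpos by simp
  have ub: "\<forall>s a. u s a \<ge> \<epsilon>0" unfolding \<epsilon>0_def using mle by (meson min.coboundedI2)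
  have boxu: "\<forall>\<pi>\<in>policies. \<pi> \<in> pbox u \<epsilon>0 \<longrightarrow> \<pi> \<in> P"
  proof (intro ballI impI)
    fix \<pi> assume pi: "\<pi> \<in> policies" "\<pi> \<in> pbox u \<epsilon>0"
    have "\<pi> \<in> pbox u \<epsilon>" using pbox_mono[OF pi(2)] unfolding \<epsilon>0_def by simp
    then have "\<pi> \<in> TT" using \<epsilon>(2) by blast
    moreover have "\<pi> s a > 0" for s a
    proof -
      have "\<bar>\<pi> s a - u s a\<bar> < \<epsilon>0" using pi(2) unfolding pbox_def by blast
      moreover have "u s a \<ge> \<epsilon>0" using ub by blast
      ultimately show ?thesis unfolding abs_less_iff by linarith
    qed
    then have "\<pi> \<in> policies_pos" using pi(1) unfolding policies_pos_def by blast
    ultimately have "\<pi> \<in> U" using TT(2) by blast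
    then show "\<pi> \<in> P" using assms(7) by blast
  qed
  have nt1: "\<exists>x\<in>policies. \<exists>y\<in>policies. J T1 d0 R1 \<gamma> x \<noteq> J T1 d0 R1 \<gamma> y"
    using assms(9) PP unfolding trivial_on_def by blast
  have nt2: "\<exists>x\<in>policies. \<exists>y\<in>policies. J T2 d0 R2 \<gamma> x \<noteq> J T2 d0 R2 \<gamma> y"
    using assms(10) PP unfolding trivial_on_def by blast
  have eq: "\<forall>x\<in>policies. \<forall>y\<in>policies. (J T1 d0 R1 \<gamma> x \<ge> J T1 d0 R1 \<gamma> y \<longleftrightarrow> J T2 d0 R2 \<gamma> x \<ge> J T2 d0 R2 \<gamma> y)"
    by (rule main_abstract[OF g1 g2 PP ni u e0 ub boxu nt1 nt2])
  then have "equivalent_on (J T1 d0 R1 \<gamma>) (J T2 d0 R2 \<gamma>) P"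
    using PP unfolding equivalent_on_def by blast
  then show False using assms(11) by blast
qed


end
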